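(* Consider the multi-task in-context regression setting described in the context (noiseless labels, prompt-augmented linear predictor). Let $\mathbf{W}^\star_{\mathrm{PT}}$ be a minimizer of the plain-training objective $\mathbf{W}\mapsto \mathcal{L}(\mathbf{W},\mathbf{P}=\mathbf{0})$ over $\mathbf{W}\in\mathbb{R}^{d\times d}$, let $\mathcal{L}^\star_{\mathrm{PT}}=\mathcal{L}(\mathbf{W}^\star_{\mathrm{PT}},\mathbf{0})$, and set $\bar{\mathbf{W}}^\star_{\mathrm{PT}}=\boldsymbol{\Sigma}_x\mathbf{W}^\star_{\mathrm{PT}}$. Then \[ \bar{\mathbf{W}}^\star_{\mathrm{PT}}=\tilde{\boldsymbol{\Sigma}}_\beta\left((n+1)\tilde{\boldsymbol{\Sigma}}_\beta+\mathrm{tr}(\tilde{\boldsymbol{\Sigma}}_\beta)\mathbf{I}\right)^{-1},\qquad \mathcal{L}^\star_{\mathrm{PT}}=\mathrm{tr}(\tilde{\boldsymbol{\Sigma}}_\beta)-n\,\mathrm{tr}\!\left(\bar{\mathbf{W}}^\star_{\mathrm{PT}}\tilde{\boldsymbol{\Sigma}}_\beta\right). \]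
   Context: Fix integers $n,d,K\ge 1$, a covariance $\boldsymbol{\Sigma}_x\in\mathbb{R}^{d\times d}$, $\boldsymbol{\Sigma}_x\succ 0$, and for each task $k\in[K]$ a mean $\boldsymbol{\mu}_k\in\mathbb{R}^d$, a covariance $\boldsymbol{\Sigma}_{\beta_k}\succ 0$, and a probability $\pi_k\ge 0$ with $\sum_k\pi_k=1$. The data distribution $\mathcal{D}_k$ of task $k$: draw $\boldsymbol{\beta}\sim\mathcal{N}(\boldsymbol{\mu}_k,\boldsymbol{\Sigma}_{\beta_k})$, then independently $\mathbf{x}_1,\dots,\mathbf{x}_{n+1}\sim\mathcal{N}(0,\boldsymbol{\Sigma}_x)$ i.i.d., and set $y_i=\mathbf{x}_i^\top\boldsymbol{\beta}$ (noiseless). Write $\mathbf{X}=[\mathbf{x}_1\ \cdots\ \mathbf{x}_n]^\top\in\mathbb{R}^{n\times d}$, $\mathbf{y}=(y_1,\dots,y_n)^\top$, $\mathbf{x}=\mathbf{x}_{n+1}$, $y=y_{n+1}$. For $\mathbf{W}\in\mathbb{R}^{d\times d}$ and a task-specific prompt vector $\bar{\mathbf{p}}_k\in\mathbb{R}^d$ the predictor for task $k$ is $f=\mathbf{x}^\top\mathbf{W}(\mathbf{X}^\top\mathbf{y}+\bar{\mathbf{p}}_k)$ (this is a one-layer linear attention model with an appended prompt token under a fixed preconditioning parametrization). With $\mathbf{P}=[\bar{\mathbf{p}}_1\ \cdots\ \bar{\mathbf{p}}_K]^\top\in\mathbb{R}^{K\times d}$, the multi-task loss is $\mathcal{L}(\mathbf{W},\mathbf{P})=\sum_{k=1}^K\pi_k\,\mathbb{E}_{\mathcal{D}_k}\big[(\mathbf{x}^\top\mathbf{W}(\mathbf{X}^\top\mathbf{y}+\bar{\mathbf{p}}_k)-y)^2\big]$.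 Define $\tilde{\boldsymbol{\Sigma}}_\beta=\boldsymbol{\Sigma}_x\sum_{k=1}^K\pi_k(\boldsymbol{\Sigma}_{\beta_k}+\boldsymbol{\mu}_k\boldsymbol{\mu}_k^\top)$ (the "biased" mixed-task covariance). *)

theory Defs
  imports "HOL-Analysis.Analysis" "HOL-Probability.Probability"
begin

definition pos_def_mat :: "real^'d^'d \<Rightarrow> bool" where
  "pos_def_mat S \<longleftrightarrow> transpose S = S \<and> (\<forall>v. v \<noteq> 0 \<longrightarrow> v \<bullet> (S *v v) > 0)"

definition outer :: "real^'d \<Rightarrow> real^'d \<Rightarrow> real^'d^'d" where
  "outer u v = (\<chi> i j. u $ i * v $ j)"

definition gauss_density :: "real^'d \<Rightarrow> real^'d^'d \<Rightarrow> real^'d \<Rightarrow> real" where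
  "gauss_density mu S v =
     exp (- (1/2) * ((v - mu) \<bullet> (matrix_inv S *v (v - mu))))
     / sqrt ((2 * pi) ^ CARD('d) * det S)"

definition mvn :: "real^'d \<Rightarrow> real^'d^'d \<Rightarrow> (real^'d) measure" where
  "mvn mu S = density lborel (\<lambda>v. ennreal (gauss_density mu S v))"

text \<open>Task distribution D_k: beta ~ N(mu, Sb), and xs i ~ N(0, Sx) i.i.d. for i = 0..n;
  xs 0, ..., xs (n-1) are the rows of X, xs n is the query x.\<close>
definition task_measure :: "nat \<Rightarrow> real^'d^'d \<Rightarrow> real^'d \<Rightarrow> real^'d^'d
     \<Rightarrow> ((real^'d) \<times> (nat \<Rightarrow> real^'d)) measure" where
  "task_measure n Sx mu Sb = mvn mu Sb \<Otimes>\<^sub>M (\<Pi>\<^sub>M i\<in>{..n}. mvn 0 Sx)"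

text \<open>Prediction x^T W (X^T y + p) with y_i = x_i^T beta.\<close>
definition predictor :: "nat \<Rightarrow> real^'d^'d \<Rightarrow> real^'d \<Rightarrow> real^'d \<Rightarrow> (nat \<Rightarrow> real^'d) \<Rightarrow> real" where
  "predictor n W p beta xs =
     xs n \<bullet> (W *v ((\<Sum>i<n. (xs i \<bullet> beta) *\<^sub>R xs i) + p))"

definition mt_loss :: "nat \<Rightarrow> real^'d^'d \<Rightarrow> ('k::finite \<Rightarrow> real) \<Rightarrow> ('k \<Rightarrow> real^'d)
     \<Rightarrow> ('k \<Rightarrow> real^'d^'d) \<Rightarrow> real^'d^'d \<Rightarrow> ('k \<Rightarrow> real^'d) \<Rightarrow> real" where
  "mt_loss n Sx prob mu Sb W P =
     (\<Sum>k\<in>UNIV. prob k * (\<integral>z. (predictor n W (P k) (fst z) (snd z) - snd z n \<bullet> fst z)\<^sup>2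
                                 \<partial>task_measure n Sx (mu k) (Sb k)))"

definition Sigma_tilde :: "real^'d^'d \<Rightarrow> ('k::finite \<Rightarrow> real) \<Rightarrow> ('k \<Rightarrow> real^'d)
     \<Rightarrow> ('k \<Rightarrow> real^'d^'d) \<Rightarrow> real^'d^'d" where
  "Sigma_tilde Sx prob mu Sb = Sx ** (\<Sum>k\<in>UNIV. prob k *\<^sub>R (Sb k + outer (mu k) (mu k)))"

end

theory Submission
  imports Defs
begin

proposition
 fixes f :: "real^'n::finite \<Rightarrow> real^'n::_"
  assumes "linear f" "S \<in> lmeasurable"
  shows measurable_linear_image': "(f ` S) \<in> lmeasurable"
    and measure_linear_image': "measure lebesgue (f ` S) = \<bar>det (matrix f)\<bar> * measure lebesgue S" (is "?Q f S")
proof -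
  have "\<forall>S \<in> lmeasurable. (f ` S) \<in> lmeasurable \<and> ?Q f S"
  proof (rule induct_linear_elementary [OF \<open>linear f\<close>]; intro ballI)
    fix f g and S :: "(real,'n) vec set"
    assume "linear f" and "linear g"
      and f [rule_format]: "\<forall>S \<in> lmeasurable. f ` S \<in> lmeasurable \<and> ?Q f S"
      and g [rule_format]: "\<forall>S \<in> lmeasurable. g ` S \<in> lmeasurable \<and> ?Q g S"
      and S: "S \<in> lmeasurable"
    then have gS: "g ` S \<in> lmeasurable"
      by blast
    show "(f \<circ> g) ` S \<in> lmeasurable \<and> ?Q (f \<circ> g) S"
      using f [OF gS] g [OF S] matrix_compose [OF \<open>linear g\<close> \<open>linear f\<close>]
      by (simp add: o_def image_comp abs_mult det_mul)
  next
    fix f :: "real^'n::_ \<Rightarrow> real^'n::_" and i and S :: "(real^'n::_) set"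
    assume "linear f" and 0: "\<And>x. f x $ i = 0" and "S \<in> lmeasurable"
    then have "\<not> inj f"
      by (metis (full_types) linear_injective_imp_surjective one_neq_zero surjE vec_component)
    have detf: "det (matrix f) = 0"
      using \<open>\<not> inj f\<close> det_nz_iff_inj[OF \<open>linear f\<close>] by blast
    show "f ` S \<in> lmeasurable \<and> ?Q f S"
    proof
      show "f ` S \<in> lmeasurable"
        using lmeasurable_iff_indicator_has_integral \<open>linear f\<close> \<open>\<not> inj f\<close> negligible_UNIV negligible_linear_singular_image by blast
      have "measure lebesgue (f ` S) = 0"
        by (meson \<open>\<not> inj f\<close> \<open>linear f\<close> negligible_imp_measure0 negligible_linear_singular_image)
      also have "\<dots> = \<bar>det (matrix f)\<bar> * measure lebesgue S"
        by (simp add: detf)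
      finally show "?Q f S" .
    qed
  next
    fix c and S :: "(real^'n::_) set"
    assume "S \<in> lmeasurable"
    show "(\<lambda>a. \<chi> i. c i * a $ i) ` S \<in> lmeasurable \<and> ?Q (\<lambda>a. \<chi> i. c i * a $ i) S"
    proof
      show "(\<lambda>a. \<chi> i. c i * a $ i) ` S \<in> lmeasurable"
        by (simp add: \<open>S \<in> lmeasurable\<close> measurable_stretch)
      show "?Q (\<lambda>a. \<chi> i. c i * a $ i) S"
        by (simp add: measure_stretch [OF \<open>S \<in> lmeasurable\<close>, of c] axis_def matrix_def det_diagonal)
    qed
  next
    fix m :: "'n" and n :: "'n" and S :: "(real, 'n) vec set"
    assume "m \<noteq> n" and "S \<in> lmeasurable"
    let ?h = "\<lambda>v::(real, 'n) vec. \<chi> i. v $ Transposition.transpose m n i"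
    have lin: "linear ?h"
      by (rule linearI) (simp_all add: plus_vec_def scaleR_vec_def)
    have meq: "measure lebesgue ((\<lambda>v::(real, 'n) vec. \<chi> i. v $ Transposition.transpose m n i) ` cbox a b)
             = measure lebesgue (cbox a b)" for a b
    proof (cases "cbox a b = {}")
      case True then show ?thesis
        by simp
    next
      case False
      then have him: "?h ` (cbox a b) \<noteq> {}"
        by blast
      have eq: "?h ` (cbox a b) = cbox (?h a) (?h b)"
        by (auto simp: image_iff lambda_swap_Galois mem_box_cart) (metis transpose_involutory)+
      show ?thesis
        using him prod.permute [OF permutes_swap_id, where S=UNIV and g="\<lambda>i. (b - a)$i", symmetric]
        by (simp add: eq content_cbox_cart False)
    qed
    have "(\<chi> i j. if Transposition.transpose m n i = j then 1 else 0) = (\<chi> i j. if j = Transposition.transpose m n i then 1 else (0::real))"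
      by (auto intro!: Cart_lambda_cong)
    then have "matrix ?h = transpose(\<chi> i j. mat 1 $ i $ Transposition.transpose m n j)"
      by (auto simp: matrix_eq transpose_def axis_def mat_def matrix_def)
    then have 1: "\<bar>det (matrix ?h)\<bar> = 1"
      by (simp add: det_permute_columns permutes_swap_id sign_swap_id abs_mult)
    show "?h ` S \<in> lmeasurable \<and> ?Q ?h S"
      using measure_linear_sufficient [OF lin \<open>S \<in> lmeasurable\<close>] meq 1 by force
  next
    fix m n :: "'n" and S :: "(real, 'n) vec set"
    assume "m \<noteq> n" and "S \<in> lmeasurable"
    let ?h = "\<lambda>v::(real, 'n) vec. \<chi> i. if i = m then v $ m + v $ n else v $ i"
    have lin: "linear ?h"
      by (rule linearI) (auto simp: algebra_simps plus_vec_def scaleR_vec_def vec_eq_iff)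
    have 1: "det(matrix ?h) = 1"
    proof -
      have "matrix ?h = (\<chi> k. if k = m then row m (mat 1) + 1 *s row n (mat 1) else row k (mat 1))"
        by (auto simp: matrix_def axis_def row_def mat_def vec_eq_iff)
      then have "det (matrix ?h) = det (mat 1 :: real^'n^'n)"
        using det_row_operation[OF \<open>m \<noteq> n\<close>, of "mat 1" 1] by simp
      then show ?thesis by simp
    qed
    have meq: "measure lebesgue (?h ` (cbox a b)) = measure lebesgue (cbox a b)" for a b
    proof (cases "cbox a b = {}")
      case True then show ?thesis by simp
    next
      case False
      then have ne: "(+) (\<chi> i. if i = n then - a $ n else 0) ` cbox a b \<noteq> {}"
        by auto
      let ?v = "\<chi> i. if i = n then - a $ n else 0"
      have "?h ` cbox a b
            = (+) (\<chi> i. if i = m \<or> i = n then a $ n else 0) ` ?h ` (+) ?v ` (cbox a b)"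
        using \<open>m \<noteq> n\<close> unfolding image_comp o_def by (force simp: vec_eq_iff)
      then have "measure lebesgue (?h ` (cbox a b))
               = measure lebesgue ((\<lambda>v. \<chi> i. if i = m then v $ m + v $ n else v $ i) `
                                   (+) ?v ` cbox a b)"
        by (rule ssubst) (rule measure_translation)
      also have "\<dots> = measure lebesgue ((\<lambda>v. \<chi> i. if i = m then v $ m + v $ n else v $ i) ` cbox (?v +a) (?v + b))"
        by (metis (no_types, lifting) cbox_translation)
      also have "\<dots> = measure lebesgue ((+) ?v ` cbox a b)"
        apply (subst measure_shear_interval)
        using \<open>m \<noteq> n\<close> ne apply auto
        apply (simp add: cbox_translation)
        by (metis cbox_borel cbox_translation measure_completion sets_lborel)
      also have "\<dots> = measure lebesgue (cbox a b)"
        by (rule measure_translation)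
        finally show ?thesis .
      qed
    show "?h ` S \<in> lmeasurable \<and> ?Q ?h S"
      using measure_linear_sufficient [OF lin \<open>S \<in> lmeasurable\<close>] meq 1 by force
  qed
  with assms show "(f ` S) \<in> lmeasurable" "?Q f S"
    by metis+
qed

lemma matrix_inv_both:
  fixes A :: "real^'n^'n"
  assumes "invertible A"
  shows "A ** matrix_inv A = mat 1" "matrix_inv A ** A = mat 1"
proof -
  have "\<exists>A'. A ** A' = mat 1 \<and> A' ** A = mat 1" using assms unfolding invertible_def by blast
  then have "A ** matrix_inv A = mat 1 \<and> matrix_inv A ** A = mat 1"
    unfolding matrix_inv_def by (rule someI_ex)
  then show "A ** matrix_inv A = mat 1" "matrix_inv A ** A = mat 1" by auto
qed

lemma inner_mat_sym:
  fixes S :: "real^'n^'n"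
  assumes "transpose S = S"
  shows "x \<bullet> (S *v y) = y \<bullet> (S *v x)"
proof -
  have "x \<bullet> (S *v y) = (\<Sum>i\<in>UNIV. \<Sum>j\<in>UNIV. x$i * S$i$j * y$j)"
    by (simp add: inner_vec_def matrix_vector_mult_def sum_distrib_left mult.assoc)
  also have "\<dots> = (\<Sum>j\<in>UNIV. \<Sum>i\<in>UNIV. x$i * S$i$j * y$j)" by (rule sum.swap)
  also have "\<dots> = (\<Sum>j\<in>UNIV. \<Sum>i\<in>UNIV. y$j * S$j$i * x$i)"
  proof -
    have "S$i$j = S$j$i" for i j using assms by (metis transpose_def vec_lambda_beta)
    then show ?thesis by (intro sum.cong refl) (simp add: mult_ac)
  qed
  also have "\<dots> = y \<bullet> (S *v x)"
    by (simp add: inner_vec_def matrix_vector_mult_def sum_distrib_left mult.assoc)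
  finally show ?thesis .
qed

lemma gs_exists:
  fixes S :: "real^'n^'n"
  assumes pd: "pos_def_mat S" and F: "finite F"
  shows "\<exists>f::'n \<Rightarrow> real^'n. \<forall>i\<in>F. \<forall>j\<in>F. f i \<bullet> (S *v f j) = (if i = j then 1 else 0)"
  using F
proof (induction F rule: finite_induct)
  case empty
  then show ?case by auto
next
  case (insert a F)
  from insert.IH obtain f where f: "\<forall>i\<in>F. \<forall>j\<in>F. f i \<bullet> (S *v f j) = (if i = j then 1 else 0)" by blast
  have sym: "transpose S = S" and pos: "\<And>v. v \<noteq> 0 \<Longrightarrow> v \<bullet> (S *v v) > 0"
    using pd unfolding pos_def_mat_def by auto
  have "card (f ` F) < CARD('n)"
  proof -
    have "card (f ` F) \<le> card F" by (rule card_image_le[OF insert.hyps(1)])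
    moreover have "card F < card (insert a F)" using insert.hyps by simp
    moreover have "card (insert a F) \<le> CARD('n)" by (rule card_mono) auto
    ultimately show ?thesis by linarith
  qed
  then have "span (f ` F) \<noteq> UNIV"
  proof -
    have fin: "finite (f ` F)" using insert.hyps(1) by simp
    show ?thesis
    proof
      assume "span (f ` F) = UNIV"
      then have "dim (UNIV::(real^'n) set) \<le> card (f ` F)" using dim_le_card fin by blast
      then show False using \<open>card (f ` F) < CARD('n)\<close> by simp
    qed
  qed
  then obtain v where v: "v \<notin> span (f ` F)" by blast
  define w where "w = v - (\<Sum>i\<in>F. (f i \<bullet> (S *v v)) *\<^sub>R f i)"
  have wne: "w \<noteq> 0"
  proof
    assume "w = 0"
    then have "v = (\<Sum>i\<in>F. (f i \<bullet> (S *v v)) *\<^sub>R f i)" unfolding w_def by simp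
    moreover have "(\<Sum>i\<in>F. (f i \<bullet> (S *v v)) *\<^sub>R f i) \<in> span (f ` F)"
      by (intro span_sum span_mul span_base) auto
    ultimately show False using v by simp
  qed
  have orth: "f j \<bullet> (S *v w) = 0" if "j \<in> F" for j
  proof -
    have "f j \<bullet> (S *v w) = f j \<bullet> (S *v v) - (\<Sum>i\<in>F. (f i \<bullet> (S *v v)) * (f j \<bullet> (S *v f i)))"
      unfolding w_def by (simp add: matrix_vector_mult_diff_distrib vec.sum matrix_vector_mult_scaleR
          inner_diff_right inner_sum_right)
    also have "(\<Sum>i\<in>F. (f i \<bullet> (S *v v)) * (f j \<bullet> (S *v f i))) = (\<Sum>i\<in>F. if i = j then f j \<bullet> (S *v v) else 0)"
      using f that by (intro sum.cong) auto
    also have "\<dots> = f j \<bullet> (S *v v)" using that insert.hyps(1) by simp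
    finally show ?thesis by simp
  qed
  have wpos: "w \<bullet> (S *v w) > 0" using pos wne by blast
  define q where "q = (1 / sqrt (w \<bullet> (S *v w))) *\<^sub>R w"
  have qq: "q \<bullet> (S *v q) = 1"
    using wpos unfolding q_def by (simp add: matrix_vector_mult_scaleR real_sqrt_mult[symmetric])
  have qf: "f j \<bullet> (S *v q) = 0" if "j \<in> F" for j
    using orth[OF that] unfolding q_def by (simp add: matrix_vector_mult_scaleR)
  have fq: "q \<bullet> (S *v f j) = 0" if "j \<in> F" for j
    using qf[OF that] inner_mat_sym[OF sym] by metis
  define f' where "f' = f(a := q)"
  have "\<forall>i\<in>insert a F. \<forall>j\<in>insert a F. f' i \<bullet> (S *v f' j) = (if i = j then 1 else 0)"
  proof (intro ballI)
    fix i j assume i: "i \<in> insert a F" and j: "j \<in> insert a F"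
    show "f' i \<bullet> (S *v f' j) = (if i = j then 1 else 0)"
    proof (cases "i = a")
      case True
      then show ?thesis
      proof (cases "j = a")
        case True
        then show ?thesis using \<open>i = a\<close> qq unfolding f'_def by simp
      next
        case False
        then have "j \<in> F" using j by simp
        then show ?thesis using \<open>i = a\<close> False fq unfolding f'_def by simp
      qed
    next
      case False
      then have iF: "i \<in> F" using i by simp
      then have ia: "i \<noteq> a" using insert.hyps(2) by auto
      show ?thesis
      proof (cases "j = a")
        case True
        then show ?thesis using ia iF qf unfolding f'_def by simp
      next
        case False
        then have "j \<in> F" using j by simp
        then have "j \<noteq> a" using insert.hyps(2) by auto
        then show ?thesis using ia iF \<open>j \<in> F\<close> f unfolding f'_def by simp
      qed
    qed
  qed
  then show ?case by blast
qed

lemma pd_factor: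
  fixes S :: "real^'n^'n"
  assumes pd: "pos_def_mat S"
  shows "\<exists>L::real^'n^'n. S = L ** transpose L \<and> invertible L"
proof -
  obtain f :: "'n \<Rightarrow> real^'n" where f: "\<forall>i\<in>UNIV. \<forall>j\<in>UNIV. f i \<bullet> (S *v f j) = (if i = j then 1 else 0)"
    using gs_exists[OF pd, of UNIV] by auto
  define Q :: "real^'n^'n" where "Q = (\<chi> r c. f c $ r)"
  have QSQ: "transpose Q ** S ** Q = mat 1"
  proof -
    have "(transpose Q ** S ** Q) $ i $ j = f i \<bullet> (S *v f j)" for i j
    proof -
      have "(transpose Q ** S ** Q) $ i $ j = (\<Sum>k\<in>UNIV. (\<Sum>l\<in>UNIV. f i $ l * S $ l $ k) * f j $ k)"
        by (simp add: Q_def matrix_matrix_mult_def transpose_def)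
      also have "\<dots> = (\<Sum>k\<in>UNIV. \<Sum>l\<in>UNIV. f i $ l * S $ l $ k * f j $ k)"
        by (simp add: sum_distrib_right)
      also have "\<dots> = (\<Sum>l\<in>UNIV. \<Sum>k\<in>UNIV. f i $ l * S $ l $ k * f j $ k)"
        by (rule sum.swap)
      also have "\<dots> = f i \<bullet> (S *v f j)"
        by (simp add: inner_vec_def matrix_vector_mult_def sum_distrib_left mult.assoc)
      finally show ?thesis .
    qed
    then show ?thesis using f by (simp add: vec_eq_iff mat_def)
  qed
  have invQ: "invertible Q"
  proof -
    have "(transpose Q ** S) ** Q = mat 1" using QSQ by simp
    then show ?thesis unfolding invertible_left_inverse by blast
  qed
  define R where "R = matrix_inv Q"
  have QR: "Q ** R = mat 1" and RQ: "R ** Q = mat 1" using matrix_inv_both[OF invQ] R_def by auto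
  have "transpose R ** R = transpose R ** (transpose Q ** S ** Q) ** R"
    by (simp only: QSQ matrix_mul_rid)
  also have "\<dots> = (transpose R ** transpose Q) ** S ** (Q ** R)"
    by (simp only: matrix_mul_assoc)
  also have "transpose R ** transpose Q = mat 1"
    by (metis QR matrix_transpose_mul transpose_mat)
  finally have "S = transpose R ** R" by (simp add: QR)
  moreover have "invertible (transpose R)"
    by (rule transpose_invertible) (use QR RQ invertible_def in blast)
  ultimately have "S = transpose R ** transpose (transpose R) \<and> invertible (transpose R)"
    by (simp add: transpose_transpose)
  then show ?thesis by blast
qed

lemma mat_vec_borel[measurable]:
  fixes A :: "real^'n^'m"
  shows "(\<lambda>u. A *v u) \<in> borel_measurable borel"
  by (intro borel_measurable_continuous_onI linear_continuous_on matrix_vector_mul_bounded_linear)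

lemma lborel_affine_mat:
  fixes A :: "real^'n^'n" and c :: "real^'n"
  assumes invA: "invertible A"
  shows "lborel = density (distr lborel borel (\<lambda>u. c + A *v u)) (\<lambda>_. ennreal \<bar>det A\<bar>)"
proof (rule lborel_eqI)
  fix l u :: "real^'n" assume le: "\<And>b. b \<in> Basis \<Longrightarrow> l \<bullet> b \<le> u \<bullet> b"
  define B where "B = matrix_inv A"
  have AB: "A ** B = mat 1" "B ** A = mat 1" using matrix_inv_both[OF invA] B_def by auto
  let ?T = "\<lambda>u. c + A *v u"
  have Tm[measurable]: "?T \<in> borel_measurable borel" by measurable
  have pre: "?T -` box l u = (\<lambda>v. B *v v) ` ((+) (-c) ` box l u)"
  proof (intro set_eqI iffI)
    fix x assume "x \<in> ?T -` box l u"
    then have "c + A *v x \<in> box l u" by simp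
    moreover have "x = B *v (- c + (c + A *v x))"
      using AB by (simp add: matrix_vector_mul_assoc)
    ultimately show "x \<in> (\<lambda>v. B *v v) ` ((+) (-c) ` box l u)" by blast
  next
    fix x assume "x \<in> (\<lambda>v. B *v v) ` ((+) (-c) ` box l u)"
    then obtain y where y: "y \<in> box l u" "x = B *v (- c + y)" by auto
    then have "c + A *v x = y" using AB by (simp add: matrix_vector_mul_assoc)
    then show "x \<in> ?T -` box l u" using y by simp
  qed
  have lm: "(+) (-c) ` box l u \<in> lmeasurable"
    by (intro measurable_translation lmeasurable_box)
  have mtr: "measure lebesgue ((+) (-c) ` box l u) = measure lebesgue (box l u)"
    by (rule measure_translation)
  have linB: "linear ((*v) B)" by (simp add: matrix_vector_mul_linear)
  have im_lm: "(\<lambda>v. B *v v) ` ((+) (-c) ` box l u) \<in> lmeasurable"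
    using measurable_linear_image'[OF linB lm] by simp
  have im_meas: "measure lebesgue ((\<lambda>v. B *v v) ` ((+) (-c) ` box l u)) = \<bar>det B\<bar> * measure lebesgue (box l u)"
    using measure_linear_image'[OF linB lm] mtr by (simp add: matrix_of_matrix_vector_mul)
  have open_pre: "?T -` box l u \<in> sets borel"
    using measurable_sets_borel[OF Tm, of "box l u"] by simp
  have "emeasure lborel (?T -` box l u) = emeasure lebesgue (?T -` box l u)"
    using open_pre by (simp add: emeasure_completion)
  also have "\<dots> = ennreal (measure lebesgue (?T -` box l u))"
    using im_lm pre by (simp add: emeasure_eq_measure2)
  also have "\<dots> = ennreal (\<bar>det B\<bar> * measure lebesgue (box l u))"
    using im_meas pre by simp
  finally have e1: "emeasure lborel (?T -` box l u) = ennreal (\<bar>det B\<bar> * measure lebesgue (box l u))" .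
  have mb: "measure lebesgue (box l u) = (\<Prod>b\<in>Basis. (u - l) \<bullet> b)"
  proof -
    have "emeasure lebesgue (box l u) = emeasure lborel (box l u)"
      by (simp add: emeasure_completion)
    also have "\<dots> = ennreal (\<Prod>b\<in>Basis. (u - l) \<bullet> b)"
      using le by (simp add: emeasure_lborel_box_eq)
    finally show ?thesis
      using lmeasurable_box[of l u] 
      by (metis emeasure_eq_measure2 ennreal_inj inner_diff_left le diff_ge_0_iff_ge prod_nonneg
            measure_nonneg)
  qed
  have dAB: "\<bar>det A\<bar> * \<bar>det B\<bar> = 1"
    using AB det_mul[of A B] by (simp add: abs_mult[symmetric])
  have "emeasure (density (distr lborel borel ?T) (\<lambda>_. ennreal \<bar>det A\<bar>)) (box l u)
        = ennreal \<bar>det A\<bar> * emeasure (distr lborel borel ?T) (box l u)"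
    by (simp add: emeasure_density nn_integral_cmult_indicator)
  also have "\<dots> = ennreal \<bar>det A\<bar> * emeasure lborel (?T -` box l u)"
    by (simp add: emeasure_distr)
  also have "\<dots> = ennreal (\<bar>det A\<bar> * \<bar>det B\<bar> * (\<Prod>b\<in>Basis. (u - l) \<bullet> b))"
    using e1 mb by (simp add: ennreal_mult'[symmetric] mult.assoc)
  also have "\<dots> = ennreal (\<Prod>b\<in>Basis. (u - l) \<bullet> b)" using dAB by simp
  finally show "emeasure (density (distr lborel borel ?T) (\<lambda>_. ennreal \<bar>det A\<bar>)) (box l u) = (\<Prod>b\<in>Basis. (u - l) \<bullet> b)" .
qed simp

lemma nn_integral_lborel_affine_mat:
  fixes A :: "real^'n^'n" and c :: "real^'n"
  assumes invA: "invertible A" and g[measurable]: "g \<in> borel_measurable borel"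
  shows "(\<integral>\<^sup>+v. g v \<partial>lborel) = ennreal \<bar>det A\<bar> * (\<integral>\<^sup>+u. g (c + A *v u) \<partial>lborel)"
proof -
  have "(\<integral>\<^sup>+v. g v \<partial>lborel) = (\<integral>\<^sup>+v. g v \<partial>density (distr lborel borel (\<lambda>u. c + A *v u)) (\<lambda>_. ennreal \<bar>det A\<bar>))"
    using lborel_affine_mat[OF invA, of c] by simp
  also have "\<dots> = (\<integral>\<^sup>+v. ennreal \<bar>det A\<bar> * g v \<partial>distr lborel borel (\<lambda>u. c + A *v u))"
    by (simp add: nn_integral_density)
  also have "\<dots> = (\<integral>\<^sup>+u. ennreal \<bar>det A\<bar> * g (c + A *v u) \<partial>lborel)"
    by (simp add: nn_integral_distr)
  also have "\<dots> = ennreal \<bar>det A\<bar> * (\<integral>\<^sup>+u. g (c + A *v u) \<partial>lborel)"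
    by (simp add: nn_integral_cmult)
  finally show ?thesis .
qed

definition N1 :: "real measure" where "N1 = density lborel std_normal_density"

definition stdN :: "(real^'n) measure" where
  "stdN = distr (PiM UNIV (\<lambda>_::'n. N1)) borel (\<lambda>f. \<chi> i. f i)"

definition phi_d :: "real^'n \<Rightarrow> real" where
  "phi_d u = (\<Prod>i\<in>UNIV. std_normal_density (u$i))"

lemma prob_space_N1: "prob_space N1"
  unfolding N1_def by (rule prob_space_normal_density) simp

lemma sets_N1[simp, measurable_cong]: "sets N1 = sets borel"
  unfolding N1_def by simp

lemma space_N1[simp]: "space N1 = UNIV"
  unfolding N1_def by simp

lemma vec_meas_borel:
  "(\<lambda>f. \<chi> i. f i) \<in> borel_measurable (PiM UNIV (\<lambda>_::'n::finite. (borel :: real measure)))"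
proof -
  have "(\<lambda>f. (\<chi> i. f i) \<bullet> b) \<in> borel_measurable (PiM UNIV (\<lambda>_::'n::finite. (borel :: real measure)))"
    if b: "b \<in> Basis" for b :: "real^'n"
  proof -
    obtain j where bj: "b = axis j 1" using b by (auto simp: Basis_vec_def)
    have "(\<lambda>f. f j) \<in> borel_measurable (PiM UNIV (\<lambda>_::'n::finite. (borel :: real measure)))"
      by (rule measurable_component_singleton) simp
    then show ?thesis using bj by (simp add: inner_axis)
  qed
  then show ?thesis by (subst borel_measurable_euclidean_space) auto
qed

lemma vec_meas[measurable]:
  "(\<lambda>f. \<chi> i. f i) \<in> borel_measurable (PiM UNIV (\<lambda>_::'n::finite. M))"
  if "sets M = sets (borel :: real measure)"
proof -
  have "sets (PiM UNIV (\<lambda>_::'n::finite. M)) = sets (PiM UNIV (\<lambda>_::'n::finite. (borel :: real measure)))"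
    by (rule sets_PiM_cong) (use that in auto)
  then show ?thesis using vec_meas_borel measurable_cong_sets[OF _ refl] by blast
qed

lemma unvec_meas:
  "(\<lambda>v::real^'n. \<lambda>i. v $ i) \<in> measurable borel (PiM UNIV (\<lambda>_::'n::finite. M))"
  if "sets M = sets (borel :: real measure)"
proof -
  have "(\<lambda>v::real^'n. \<lambda>i. v $ i) \<in> measurable borel (PiM UNIV (\<lambda>_::'n::finite. (borel :: real measure)))"
    by (rule measurable_PiM_single') auto
  moreover have "sets (PiM UNIV (\<lambda>_::'n::finite. M)) = sets (PiM UNIV (\<lambda>_::'n::finite. (borel :: real measure)))"
    by (rule sets_PiM_cong) (use that in auto)
  ultimately show ?thesis using measurable_cong_sets[OF refl] by blast
qed

lemma lborel_vec: "(lborel :: (real^'n::finite) measure) = distr (PiM UNIV (\<lambda>_::'n. lborel)) borel (\<lambda>f. \<chi> i. f i)"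
proof (rule lborel_eqI)
  fix l u :: "real^'n" assume le: "\<And>b. b \<in> Basis \<Longrightarrow> l \<bullet> b \<le> u \<bullet> b"
  have leu: "l $ i \<le> u $ i" for i using le[of "axis i 1"] by (auto simp: Basis_vec_def inner_axis)
  interpret product_sigma_finite "\<lambda>_::'n. lborel" by standard
  have pre: "(\<lambda>f. \<chi> i. f i) -` box l u \<inter> space (PiM UNIV (\<lambda>_::'n. lborel)) = (\<Pi>\<^sub>E i\<in>UNIV. {l$i<..<u$i})"
    by (auto simp: space_PiM mem_box_cart PiE_def extensional_def Pi_iff)
  have "emeasure (distr (PiM UNIV (\<lambda>_::'n. lborel)) borel (\<lambda>f. \<chi> i. f i)) (box l u)
      = emeasure (PiM UNIV (\<lambda>_::'n. lborel)) (\<Pi>\<^sub>E i\<in>UNIV. {l$i<..<u$i})"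
    by (subst emeasure_distr) (auto simp: pre)
  also have "\<dots> = (\<Prod>i\<in>UNIV. emeasure lborel {l$i<..<u$i})"
    by (rule emeasure_PiM) auto
  also have "\<dots> = (\<Prod>i\<in>UNIV. ennreal (u$i - l$i))"
    using leu by simp
  also have "\<dots> = ennreal (\<Prod>i\<in>UNIV. u$i - l$i)"
    using leu by (simp add: prod_ennreal)
  also have "(\<Prod>i\<in>UNIV. u$i - l$i) = (\<Prod>b\<in>Basis. (u - l) \<bullet> b)"
  proof -
    have "(\<Prod>b\<in>Basis. (u - l) \<bullet> b) = (\<Prod>b\<in>(\<lambda>i. axis i 1) ` UNIV. (u - l) \<bullet> b)"
    proof -
      have "(Basis :: (real^'n) set) = (\<lambda>i. axis i 1) ` UNIV" by (auto simp: Basis_vec_def)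
      then show ?thesis by simp
    qed
    also have "\<dots> = (\<Prod>i\<in>UNIV. (u - l) \<bullet> axis i 1)"
      by (subst prod.reindex) (auto simp: inj_on_def axis_eq_axis)
    finally show ?thesis by (simp add: inner_axis)
  qed
  finally show "emeasure (distr (PiM UNIV (\<lambda>_::'n. lborel)) borel (\<lambda>f. \<chi> i. f i)) (box l u) = (\<Prod>b\<in>Basis. (u - l) \<bullet> b)" .
qed simp


lemma PiM_N1:
  "PiM UNIV (\<lambda>_::'n::finite. N1) =
     density (PiM UNIV (\<lambda>_::'n. lborel)) (\<lambda>f. \<Prod>i\<in>UNIV. ennreal (std_normal_density (f i)))"
proof -
  interpret N: product_sigma_finite "\<lambda>_::'n. N1"
    unfolding product_sigma_finite_def using prob_space_imp_sigma_finite[OF prob_space_N1] by blast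
  interpret L: product_sigma_finite "\<lambda>_::'n. lborel" by standard
  show ?thesis
  proof (rule N.PiM_eqI[symmetric])
    show "finite (UNIV :: 'n set)" by simp
    show "sets (density (PiM UNIV (\<lambda>_::'n. lborel)) (\<lambda>f. \<Prod>i\<in>UNIV. ennreal (std_normal_density (f i))))
          = sets (PiM UNIV (\<lambda>_::'n. N1))"
      unfolding sets_density by (rule sets_PiM_cong) simp_all
  next
    fix A :: "'n \<Rightarrow> real set" assume A: "\<And>i. i \<in> UNIV \<Longrightarrow> A i \<in> sets N1"
    have Ab[measurable]: "A i \<in> sets borel" for i using A by simp
    have "emeasure (density (PiM UNIV (\<lambda>_::'n. lborel)) (\<lambda>f. \<Prod>i\<in>UNIV. ennreal (std_normal_density (f i)))) (Pi\<^sub>E UNIV A)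
        = (\<integral>\<^sup>+f. (\<Prod>i\<in>UNIV. ennreal (std_normal_density (f i))) * indicator (Pi\<^sub>E UNIV A) f \<partial>PiM UNIV (\<lambda>_::'n. lborel))"
      by (subst emeasure_density) (auto intro!: sets_PiM_I_finite)
    also have "\<dots> = (\<integral>\<^sup>+f. (\<Prod>i\<in>UNIV. ennreal (std_normal_density (f i)) * indicator (A i) (f i)) \<partial>PiM UNIV (\<lambda>_::'n. lborel))"
      by (intro nn_integral_cong) (auto simp: prod.distrib indicator_def PiE_iff space_PiM)
    also have "\<dots> = (\<Prod>i\<in>UNIV. \<integral>\<^sup>+x. ennreal (std_normal_density x) * indicator (A i) x \<partial>lborel)"
      by (rule L.product_nn_integral_prod) auto
    also have "\<dots> = (\<Prod>i\<in>UNIV. emeasure N1 (A i))"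
      unfolding N1_def by (intro prod.cong refl) (simp add: emeasure_density)
    finally show "emeasure (density (PiM UNIV (\<lambda>_::'n. lborel)) (\<lambda>f. \<Prod>i\<in>UNIV. ennreal (std_normal_density (f i)))) (Pi\<^sub>E UNIV A)
        = (\<Prod>i\<in>UNIV. emeasure N1 (A i))" .
  qed
qed

lemma phi_d_meas[measurable]: "phi_d \<in> borel_measurable borel"
  unfolding phi_d_def by measurable

lemma phi_d_nonneg: "phi_d u \<ge> 0"
  unfolding phi_d_def by (simp add: prod_nonneg)

lemma stdN_density: "(stdN :: (real^'n::finite) measure) = density lborel (\<lambda>u. ennreal (phi_d u))"
proof -
  have "density (lborel :: (real^'n) measure) (\<lambda>u. ennreal (phi_d u))
      = density (distr (PiM UNIV (\<lambda>_::'n. lborel)) borel (\<lambda>f. \<chi> i. f i)) (\<lambda>u. ennreal (phi_d u))"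
    using lborel_vec by metis
  also have "\<dots> = distr (density (PiM UNIV (\<lambda>_::'n. lborel)) (\<lambda>f. ennreal (phi_d (\<chi> i. f i)))) borel (\<lambda>f. \<chi> i. f i)"
    by (rule density_distr) (auto intro: vec_meas)
  also have "(\<lambda>f. ennreal (phi_d (\<chi> i. f i))) = (\<lambda>f::'n \<Rightarrow> real. \<Prod>i\<in>UNIV. ennreal (std_normal_density (f i)))"
    by (auto simp: phi_d_def prod_ennreal)
  also have "density (PiM UNIV (\<lambda>_::'n. lborel)) \<dots> = PiM UNIV (\<lambda>_::'n. N1)"
    by (rule PiM_N1[symmetric])
  finally show ?thesis unfolding stdN_def by simp
qed

lemma sets_stdN[simp, measurable_cong]: "sets stdN = sets borel"
  unfolding stdN_def by simp

lemma space_stdN[simp]: "space stdN = UNIV"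
  unfolding stdN_def by simp

lemma prob_space_stdN: "prob_space (stdN :: (real^'n::finite) measure)"
proof -
  interpret P: prob_space "PiM UNIV (\<lambda>_::'n. N1)"
    by (rule prob_space_PiM) (rule prob_space_N1)
  show ?thesis unfolding stdN_def
    by (rule P.prob_space_distr) (auto intro: vec_meas)
qed

lemma stdN_prod:
  fixes h :: "'n::finite \<Rightarrow> real \<Rightarrow> real"
  assumes int: "\<And>i. integrable N1 (h i)"
  shows "integrable stdN (\<lambda>u::real^'n. \<Prod>i\<in>UNIV. h i (u$i))"
    and "integral\<^sup>L stdN (\<lambda>u::real^'n. \<Prod>i\<in>UNIV. h i (u$i)) = (\<Prod>i\<in>UNIV. integral\<^sup>L N1 (h i))"
proof -
  interpret N: product_sigma_finite "\<lambda>_::'n. N1"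
    unfolding product_sigma_finite_def using prob_space_imp_sigma_finite[OF prob_space_N1] by blast
  have hm[measurable]: "h i \<in> borel_measurable borel" for i
    using borel_measurable_integrable[OF int[of i]] measurable_cong_sets[OF sets_N1 refl] by blast
  have gm: "(\<lambda>u::real^'n. \<Prod>i\<in>UNIV. h i (u$i)) \<in> borel_measurable borel" by measurable
  have vm: "(\<lambda>f. \<chi> i. f i) \<in> measurable (PiM UNIV (\<lambda>_::'n. N1)) borel"
    by (rule vec_meas) simp
  have "integrable (PiM UNIV (\<lambda>_::'n. N1)) (\<lambda>f. \<Prod>i\<in>UNIV. h i (f i))"
    by (rule N.product_integrable_prod) (auto intro: int)
  then show "integrable stdN (\<lambda>u::real^'n. \<Prod>i\<in>UNIV. h i (u$i))"
    unfolding stdN_def by (subst integrable_distr_eq[OF vm gm]) simp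
  have "integral\<^sup>L stdN (\<lambda>u::real^'n. \<Prod>i\<in>UNIV. h i (u$i)) = integral\<^sup>L (PiM UNIV (\<lambda>_::'n. N1)) (\<lambda>f. \<Prod>i\<in>UNIV. h i (f i))"
    unfolding stdN_def by (subst integral_distr[OF vm gm]) simp
  also have "\<dots> = (\<Prod>i\<in>UNIV. integral\<^sup>L N1 (h i))"
    by (rule N.product_integral_prod) (auto intro: int)
  finally show "integral\<^sup>L stdN (\<lambda>u::real^'n. \<Prod>i\<in>UNIV. h i (u$i)) = (\<Prod>i\<in>UNIV. integral\<^sup>L N1 (h i))" .
qed

definition mom :: "nat \<Rightarrow> real" where
  "mom k = (if even k then fact k / (2 ^ (k div 2) * fact (k div 2)) else 0)"

lemma N1_pow: "integrable N1 (\<lambda>x. x ^ k)" "integral\<^sup>L N1 (\<lambda>x. x ^ k) = mom k"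
proof -
  have im: "integrable lborel (\<lambda>x. std_normal_density x * x ^ k)"
  proof -
    have "integrable lborel (\<lambda>x. \<bar>std_normal_density x * x ^ k\<bar>)"
      using integrable_std_normal_moment_abs[of k] by (simp add: abs_mult power_abs)
    then show ?thesis by (subst (asm) integrable_abs_iff) auto
  qed
  show "integrable N1 (\<lambda>x. x ^ k)"
    unfolding N1_def using im by (subst integrable_density) auto
  have "integral\<^sup>L N1 (\<lambda>x. x ^ k) = integral\<^sup>L lborel (\<lambda>x. std_normal_density x * x ^ k)"
    unfolding N1_def by (subst integral_density) auto
  also have "\<dots> = mom k"
  proof (cases "even k")
    case True
    then obtain j where k: "k = 2 * j" by (auto elim: evenE)
    show ?thesis using integral_std_normal_moment_even[of j] by (simp add: k mom_def)
  next
    case False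
    then obtain j where k: "k = 2 * j + 1" by (auto elim: oddE)
    show ?thesis using integral_std_normal_moment_odd[of j] by (simp add: k mom_def)
  qed
  finally show "integral\<^sup>L N1 (\<lambda>x. x ^ k) = mom k" .
qed

lemma stdN_monomial:
  fixes k :: "'n::finite \<Rightarrow> nat"
  shows "integrable stdN (\<lambda>u::real^'n. \<Prod>i\<in>UNIV. (u$i) ^ k i)"
    and "integral\<^sup>L stdN (\<lambda>u::real^'n. \<Prod>i\<in>UNIV. (u$i) ^ k i) = (\<Prod>i\<in>UNIV. mom (k i))"
  using stdN_prod[of "\<lambda>i x. x ^ k i"] N1_pow by auto

lemma pow_ind_prod:
  fixes x :: "real^'n::finite"
  shows "(\<Prod>i\<in>UNIV. x$i ^ (if i = a then 1 else 0)) = x$a"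
proof -
  have "(\<Prod>i\<in>UNIV. x$i ^ (if i = a then 1 else 0)) = (\<Prod>i\<in>UNIV. if i = a then x$i else 1)"
    by (intro prod.cong) auto
  also have "\<dots> = x$a" by (simp add: prod.delta)
  finally show ?thesis .
qed

definition ind :: "'n \<Rightarrow> 'n \<Rightarrow> nat" where "ind a i = (if i = a then 1 else 0)"

lemma monomial_eq1: "(u::real^'n::finite)$a = (\<Prod>i\<in>UNIV. u$i ^ ind a i)"
  using pow_ind_prod[of u a] by (simp add: ind_def)

lemma monomial_eq2: "(u::real^'n::finite)$a * u$b = (\<Prod>i\<in>UNIV. u$i ^ (ind a i + ind b i))"
  by (simp add: power_add prod.distrib monomial_eq1[symmetric])

lemma monomial_eq4: "(u::real^'n::finite)$a * u$b * u$c * u$e =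
   (\<Prod>i\<in>UNIV. u$i ^ (ind a i + ind b i + ind c i + ind e i))"
  by (simp add: power_add prod.distrib monomial_eq1[symmetric])

lemma mom_vals0: "mom 0 = 1" "mom 1 = 0" "mom 2 = 1" "mom 3 = 0" "mom 4 = 3"
  by (simp_all add: mom_def fact_numeral)

lemma mom_vals: "mom 0 = 1" "mom 1 = 0" "mom 2 = 1" "mom 3 = 0" "mom 4 = 3"
  "mom (Suc 0) = 0" "mom (Suc (Suc 0)) = 1" "mom (Suc (Suc (Suc 0))) = 0" "mom (Suc (Suc (Suc (Suc 0)))) = 3"
proof -
  have e1: "Suc 0 = 1" and e2: "Suc (Suc 0) = 2" and e3: "Suc (Suc (Suc 0)) = 3" and e4: "Suc (Suc (Suc (Suc 0))) = 4" by simp_all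
  show "mom 0 = 1" "mom 1 = 0" "mom 2 = 1" "mom 3 = 0" "mom 4 = 3" by (fact mom_vals0)+
  show "mom (Suc 0) = 0" by (subst e1) (fact mom_vals0)
  show "mom (Suc (Suc 0)) = 1" by (subst e2) (fact mom_vals0)
  show "mom (Suc (Suc (Suc 0))) = 0" by (subst e3) (fact mom_vals0)
  show "mom (Suc (Suc (Suc (Suc 0)))) = 3" by (subst e4) (fact mom_vals0)
qed

lemma prod_mom_restrict:
  fixes k :: "'n::finite \<Rightarrow> nat"
  assumes "\<And>i. i \<notin> T \<Longrightarrow> k i = 0"
  shows "(\<Prod>i\<in>UNIV. mom (k i)) = (\<Prod>i\<in>T. mom (k i))"
  by (rule prod.mono_neutral_right) (auto simp: assms mom_vals)

lemma stdN_c1: "integrable stdN (\<lambda>u::real^'n::finite. u$a)" "integral\<^sup>L stdN (\<lambda>u::real^'n::finite. u$a) = 0"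
proof -
  show "integrable stdN (\<lambda>u::real^'n::finite. u$a)"
    by (subst monomial_eq1) (rule stdN_monomial)
  have "integral\<^sup>L stdN (\<lambda>u::real^'n::finite. u$a) = (\<Prod>i\<in>UNIV. mom (ind a i))"
    by (subst monomial_eq1) (rule stdN_monomial)
  also have "\<dots> = (\<Prod>i\<in>{a}. mom (ind a i))"
    by (rule prod_mom_restrict) (auto simp: ind_def)
  also have "\<dots> = 0" by (simp add: ind_def mom_vals)
  finally show "integral\<^sup>L stdN (\<lambda>u::real^'n::finite. u$a) = 0" .
qed

lemma stdN_c2: "integrable stdN (\<lambda>u::real^'n::finite. u$a * u$b)"
  "integral\<^sup>L stdN (\<lambda>u::real^'n::finite. u$a * u$b) = of_bool (a = b)"
proof -
  show "integrable stdN (\<lambda>u::real^'n::finite. u$a * u$b)"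
    by (subst monomial_eq2) (rule stdN_monomial)
  have "integral\<^sup>L stdN (\<lambda>u::real^'n::finite. u$a * u$b) = (\<Prod>i\<in>UNIV. mom (ind a i + ind b i))"
    by (subst monomial_eq2) (rule stdN_monomial)
  also have "\<dots> = (\<Prod>i\<in>{a,b}. mom (ind a i + ind b i))"
    by (rule prod_mom_restrict) (auto simp: ind_def)
  also have "\<dots> = of_bool (a = b)"
    by (cases "a = b") (simp_all add: ind_def mom_vals)
  finally show "integral\<^sup>L stdN (\<lambda>u::real^'n::finite. u$a * u$b) = of_bool (a = b)" .
qed

lemma stdN_c4: "integrable stdN (\<lambda>u::real^'n::finite. u$a * u$b * u$c * u$e)"
  "integral\<^sup>L stdN (\<lambda>u::real^'n::finite. u$a * u$b * u$c * u$e) =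
     of_bool (a = b) * of_bool (c = e) + of_bool (a = c) * of_bool (b = e) + of_bool (a = e) * of_bool (b = c)"
proof -
  show "integrable stdN (\<lambda>u::real^'n::finite. u$a * u$b * u$c * u$e)"
    by (subst monomial_eq4) (rule stdN_monomial)
  have "integral\<^sup>L stdN (\<lambda>u::real^'n::finite. u$a * u$b * u$c * u$e)
      = (\<Prod>i\<in>UNIV. mom (ind a i + ind b i + ind c i + ind e i))"
    by (subst monomial_eq4) (rule stdN_monomial)
  also have "\<dots> = (\<Prod>i\<in>{a,b,c,e}. mom (ind a i + ind b i + ind c i + ind e i))"
    by (rule prod_mom_restrict) (auto simp: ind_def)
  also have "\<dots> = of_bool (a = b) * of_bool (c = e) + of_bool (a = c) * of_bool (b = e) + of_bool (a = e) * of_bool (b = c)"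
    by (cases "a = b"; cases "a = c"; cases "a = e"; cases "b = c"; cases "b = e"; cases "c = e")
       (simp_all add: ind_def mom_vals prod.insert_if)
  finally show "integral\<^sup>L stdN (\<lambda>u::real^'n::finite. u$a * u$b * u$c * u$e) =
     of_bool (a = b) * of_bool (c = e) + of_bool (a = c) * of_bool (b = e) + of_bool (a = e) * of_bool (b = c)" .
qed

lemma sum_ob: "(\<Sum>b\<in>UNIV. f b * of_bool (a = b)) = (f a :: real)" for a :: "'n::finite"
proof -
  have "(\<Sum>b\<in>UNIV. f b * of_bool (a = b)) = (\<Sum>b\<in>UNIV. if a = b then f b else 0)"
    by (intro sum.cong) auto
  also have "\<dots> = f a" by simp
  finally show ?thesis .
qed

lemma quad_L:
  fixes p q r s :: "real^'n::finite"
  shows "(\<Sum>a\<in>UNIV. \<Sum>b\<in>UNIV. \<Sum>c\<in>UNIV. \<Sum>d\<in>UNIV. (p$a * q$b * r$c * s$d) * (of_bool (a = b) * of_bool (c = d)))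
    = (p \<bullet> q) * (r \<bullet> s)"
proof -
  have "(\<Sum>a\<in>UNIV. \<Sum>b\<in>UNIV. \<Sum>c\<in>UNIV. \<Sum>d\<in>UNIV. (p$a * q$b * r$c * s$d) * (of_bool (a = b) * of_bool (c = d)))
      = (\<Sum>a\<in>UNIV. \<Sum>b\<in>UNIV. \<Sum>c\<in>UNIV. \<Sum>d\<in>UNIV. (p$a * q$b * of_bool (a = b)) * (r$c * s$d * of_bool (c = d)))"
    by (intro sum.cong refl) (simp only: mult_ac)
  also have "\<dots> = (\<Sum>a\<in>UNIV. \<Sum>b\<in>UNIV. (p$a * q$b * of_bool (a = b)) * (\<Sum>c\<in>UNIV. \<Sum>d\<in>UNIV. r$c * s$d * of_bool (c = d)))"
    by (simp only: sum_distrib_left)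
  also have "\<dots> = (\<Sum>a\<in>UNIV. \<Sum>b\<in>UNIV. p$a * q$b * of_bool (a = b)) * (\<Sum>c\<in>UNIV. \<Sum>d\<in>UNIV. r$c * s$d * of_bool (c = d))"
    by (simp only: sum_distrib_right)
  also have "(\<Sum>a\<in>UNIV. \<Sum>b\<in>UNIV. p$a * q$b * of_bool (a = b)) = p \<bullet> q"
    by (simp only: sum_ob inner_vec_def inner_real_def)
  also have "(\<Sum>c\<in>UNIV. \<Sum>d\<in>UNIV. r$c * s$d * of_bool (c = d)) = r \<bullet> s"
    by (simp only: sum_ob inner_vec_def inner_real_def)
  finally show ?thesis .
qed

lemma quad_all:
  fixes p q r s :: "real^'n::finite"
  shows "(\<Sum>a\<in>UNIV. \<Sum>b\<in>UNIV. \<Sum>c\<in>UNIV. \<Sum>d\<in>UNIV. (p$a * q$b * r$c * s$d) *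
   (of_bool (a = b) * of_bool (c = d) + of_bool (a = c) * of_bool (b = d) + of_bool (a = d) * of_bool (b = c)))
  = (p \<bullet> q) * (r \<bullet> s) + (p \<bullet> r) * (q \<bullet> s) + (p \<bullet> s) * (q \<bullet> r)"
proof -
  have split: "(\<Sum>a\<in>UNIV. \<Sum>b\<in>UNIV. \<Sum>c\<in>UNIV. \<Sum>d\<in>UNIV. (p$a * q$b * r$c * s$d) *
   (of_bool (a = b) * of_bool (c = d) + of_bool (a = c) * of_bool (b = d) + of_bool (a = d) * of_bool (b = c)))
   = (\<Sum>a\<in>UNIV. \<Sum>b\<in>UNIV. \<Sum>c\<in>UNIV. \<Sum>d\<in>UNIV. (p$a * q$b * r$c * s$d) * (of_bool (a = b) * of_bool (c = d)))
   + (\<Sum>a\<in>UNIV. \<Sum>b\<in>UNIV. \<Sum>c\<in>UNIV. \<Sum>d\<in>UNIV. (p$a * q$b * r$c * s$d) * (of_bool (a = c) * of_bool (b = d)))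
   + (\<Sum>a\<in>UNIV. \<Sum>b\<in>UNIV. \<Sum>c\<in>UNIV. \<Sum>d\<in>UNIV. (p$a * q$b * r$c * s$d) * (of_bool (a = d) * of_bool (b = c)))"
    by (simp only: distrib_left sum.distrib)
  have t2: "(\<Sum>a\<in>UNIV. \<Sum>b\<in>UNIV. \<Sum>c\<in>UNIV. \<Sum>d\<in>UNIV. (p$a * q$b * r$c * s$d) * (of_bool (a = c) * of_bool (b = d)))
     = (\<Sum>a\<in>UNIV. \<Sum>c\<in>UNIV. \<Sum>b\<in>UNIV. \<Sum>d\<in>UNIV. (p$a * q$b * r$c * s$d) * (of_bool (a = c) * of_bool (b = d)))"
    by (rule sum.cong[OF refl], rule sum.swap)
  also have "\<dots> = (\<Sum>a\<in>UNIV. \<Sum>b\<in>UNIV. \<Sum>c\<in>UNIV. \<Sum>d\<in>UNIV. (p$a * r$b * q$c * s$d) * (of_bool (a = b) * of_bool (c = d)))"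
    by (intro sum.cong refl) (simp only: mult_ac)
  also have "\<dots> = (p \<bullet> r) * (q \<bullet> s)" by (rule quad_L)
  finally have t2: "(\<Sum>a\<in>UNIV. \<Sum>b\<in>UNIV. \<Sum>c\<in>UNIV. \<Sum>d\<in>UNIV. (p$a * q$b * r$c * s$d) * (of_bool (a = c) * of_bool (b = d)))
     = (p \<bullet> r) * (q \<bullet> s)" .
  have sw3: "(\<Sum>b\<in>UNIV. \<Sum>c\<in>UNIV. \<Sum>d\<in>UNIV. F b c d) = (\<Sum>d\<in>UNIV. \<Sum>b\<in>UNIV. \<Sum>c\<in>UNIV. F b c d)"
    for F :: "'n \<Rightarrow> 'n \<Rightarrow> 'n \<Rightarrow> real"
  proof -
    have "(\<Sum>b\<in>UNIV. \<Sum>c\<in>UNIV. \<Sum>d\<in>UNIV. F b c d) = (\<Sum>b\<in>UNIV. \<Sum>d\<in>UNIV. \<Sum>c\<in>UNIV. F b c d)"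
      by (rule sum.cong[OF refl], rule sum.swap)
    also have "\<dots> = (\<Sum>d\<in>UNIV. \<Sum>b\<in>UNIV. \<Sum>c\<in>UNIV. F b c d)" by (rule sum.swap)
    finally show ?thesis .
  qed
  have "(\<Sum>a\<in>UNIV. \<Sum>b\<in>UNIV. \<Sum>c\<in>UNIV. \<Sum>d\<in>UNIV. (p$a * q$b * r$c * s$d) * (of_bool (a = d) * of_bool (b = c)))
     = (\<Sum>a\<in>UNIV. \<Sum>d\<in>UNIV. \<Sum>b\<in>UNIV. \<Sum>c\<in>UNIV. (p$a * q$b * r$c * s$d) * (of_bool (a = d) * of_bool (b = c)))"
    by (rule sum.cong[OF refl], rule sw3)
  also have "\<dots> = (\<Sum>a\<in>UNIV. \<Sum>b\<in>UNIV. \<Sum>c\<in>UNIV. \<Sum>d\<in>UNIV. (p$a * s$b * q$c * r$d) * (of_bool (a = b) * of_bool (c = d)))"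
    by (intro sum.cong refl) (simp only: mult_ac)
  also have "\<dots> = (p \<bullet> s) * (q \<bullet> r)" by (rule quad_L)
  finally have t3: "(\<Sum>a\<in>UNIV. \<Sum>b\<in>UNIV. \<Sum>c\<in>UNIV. \<Sum>d\<in>UNIV. (p$a * q$b * r$c * s$d) * (of_bool (a = d) * of_bool (b = c)))
     = (p \<bullet> s) * (q \<bullet> r)" .
  show ?thesis unfolding split t2 t3 quad_L ..
qed

lemma sum_prod3: "(\<Sum>a\<in>A. \<Sum>b\<in>B. F a b) * (\<Sum>c\<in>C. h c) = (\<Sum>a\<in>A. \<Sum>b\<in>B. \<Sum>c\<in>C. F a b * (h c :: real))"
proof -
  have "(\<Sum>a\<in>A. \<Sum>b\<in>B. F a b) * (\<Sum>c\<in>C. h c) = (\<Sum>a\<in>A. (\<Sum>b\<in>B. F a b) * (\<Sum>c\<in>C. h c))"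
    by (rule sum_distrib_right)
  also have "\<dots> = (\<Sum>a\<in>A. \<Sum>b\<in>B. F a b * (\<Sum>c\<in>C. h c))"
    by (intro sum.cong refl sum_distrib_right)
  also have "\<dots> = (\<Sum>a\<in>A. \<Sum>b\<in>B. \<Sum>c\<in>C. F a b * h c)"
    by (intro sum.cong refl sum_distrib_left)
  finally show ?thesis .
qed

lemma sum_prod4: "(\<Sum>a\<in>A. \<Sum>b\<in>B. \<Sum>c\<in>C. F a b c) * (\<Sum>d\<in>D. h d) = (\<Sum>a\<in>A. \<Sum>b\<in>B. \<Sum>c\<in>C. \<Sum>d\<in>D. F a b c * (h d :: real))"
proof -
  have "(\<Sum>a\<in>A. \<Sum>b\<in>B. \<Sum>c\<in>C. F a b c) * (\<Sum>d\<in>D. h d) = (\<Sum>a\<in>A. (\<Sum>b\<in>B. \<Sum>c\<in>C. F a b c) * (\<Sum>d\<in>D. h d))"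
    by (rule sum_distrib_right)
  also have "\<dots> = (\<Sum>a\<in>A. \<Sum>b\<in>B. \<Sum>c\<in>C. \<Sum>d\<in>D. F a b c * h d)"
    by (intro sum.cong refl sum_prod3)
  finally show ?thesis .
qed

lemma inner_sum_exp: "p \<bullet> (u::real^'n::finite) = (\<Sum>a\<in>UNIV. p$a * u$a)"
  by (simp add: inner_vec_def)

lemma lin2_exp: "(p \<bullet> u) * (q \<bullet> (u::real^'n::finite)) = (\<Sum>a\<in>UNIV. \<Sum>b\<in>UNIV. (p$a * q$b) * (u$a * u$b))"
  unfolding inner_sum_exp sum_product by (intro sum.cong refl) (simp only: mult_ac)

lemma lin4_exp: "(p \<bullet> u) * (q \<bullet> u) * (r \<bullet> u) * (s \<bullet> (u::real^'n::finite)) =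
  (\<Sum>a\<in>UNIV. \<Sum>b\<in>UNIV. \<Sum>c\<in>UNIV. \<Sum>d\<in>UNIV. (p$a * q$b * r$c * s$d) * (u$a * u$b * u$c * u$d))"
proof -
  have h1: "(p \<bullet> u) * (q \<bullet> u) = (\<Sum>a\<in>UNIV. \<Sum>b\<in>UNIV. (p$a * u$a) * (q$b * u$b))"
    unfolding inner_sum_exp by (rule sum_product)
  have h2: "(p \<bullet> u) * (q \<bullet> u) * (r \<bullet> u) = (\<Sum>a\<in>UNIV. \<Sum>b\<in>UNIV. \<Sum>c\<in>UNIV. (p$a * u$a) * (q$b * u$b) * (r$c * u$c))"
    unfolding h1 inner_sum_exp[of r] by (rule sum_prod3)
  have h3: "(p \<bullet> u) * (q \<bullet> u) * (r \<bullet> u) * (s \<bullet> u) = (\<Sum>a\<in>UNIV. \<Sum>b\<in>UNIV. \<Sum>c\<in>UNIV. \<Sum>d\<in>UNIV. (p$a * u$a) * (q$b * u$b) * (r$c * u$c) * (s$d * u$d))"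
    unfolding h2 inner_sum_exp[of s] by (rule sum_prod4)
  show ?thesis unfolding h3 by (intro sum.cong refl) (simp only: mult_ac)
qed

lemma stdN_lin1: "integrable stdN (\<lambda>u::real^'n::finite. p \<bullet> u)" "integral\<^sup>L stdN (\<lambda>u::real^'n::finite. p \<bullet> u) = 0"
  unfolding inner_sum_exp by (simp_all add: stdN_c1)

lemma stdN_lin2: "integrable stdN (\<lambda>u::real^'n::finite. (p \<bullet> u) * (q \<bullet> u))"
  "integral\<^sup>L stdN (\<lambda>u::real^'n::finite. (p \<bullet> u) * (q \<bullet> u)) = p \<bullet> q"
proof -
  show "integrable stdN (\<lambda>u::real^'n::finite. (p \<bullet> u) * (q \<bullet> u))"
    unfolding lin2_exp by (intro Bochner_Integration.integrable_sum integrable_mult_right stdN_c2)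
  have "integral\<^sup>L stdN (\<lambda>u::real^'n::finite. (p \<bullet> u) * (q \<bullet> u))
      = (\<Sum>a\<in>UNIV. \<Sum>b\<in>UNIV. (p$a * q$b) * of_bool (a = b))"
    unfolding lin2_exp
    by (simp add: Bochner_Integration.integral_sum Bochner_Integration.integrable_sum stdN_c2 integrable_mult_right)
  also have "\<dots> = p \<bullet> q" by (simp only: sum_ob inner_sum_exp)
  finally show "integral\<^sup>L stdN (\<lambda>u::real^'n::finite. (p \<bullet> u) * (q \<bullet> u)) = p \<bullet> q" .
qed

lemma stdN_lin4: "integrable stdN (\<lambda>u::real^'n::finite. (p \<bullet> u) * (q \<bullet> u) * (r \<bullet> u) * (s \<bullet> u))"
  "integral\<^sup>L stdN (\<lambda>u::real^'n::finite. (p \<bullet> u) * (q \<bullet> u) * (r \<bullet> u) * (s \<bullet> u))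
     = (p \<bullet> q) * (r \<bullet> s) + (p \<bullet> r) * (q \<bullet> s) + (p \<bullet> s) * (q \<bullet> r)"
proof -
  show "integrable stdN (\<lambda>u::real^'n::finite. (p \<bullet> u) * (q \<bullet> u) * (r \<bullet> u) * (s \<bullet> u))"
    unfolding lin4_exp by (intro Bochner_Integration.integrable_sum integrable_mult_right stdN_c4)
  have "integral\<^sup>L stdN (\<lambda>u::real^'n::finite. (p \<bullet> u) * (q \<bullet> u) * (r \<bullet> u) * (s \<bullet> u))
      = (\<Sum>a\<in>UNIV. \<Sum>b\<in>UNIV. \<Sum>c\<in>UNIV. \<Sum>d\<in>UNIV. (p$a * q$b * r$c * s$d) *
   (of_bool (a = b) * of_bool (c = d) + of_bool (a = c) * of_bool (b = d) + of_bool (a = d) * of_bool (b = c)))"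
    unfolding lin4_exp
    by (simp only: Bochner_Integration.integral_sum Bochner_Integration.integrable_sum stdN_c4 integrable_mult_right integral_mult_right_zero)
  also have "\<dots> = (p \<bullet> q) * (r \<bullet> s) + (p \<bullet> r) * (q \<bullet> s) + (p \<bullet> s) * (q \<bullet> r)"
    by (rule quad_all)
  finally show "integral\<^sup>L stdN (\<lambda>u::real^'n::finite. (p \<bullet> u) * (q \<bullet> u) * (r \<bullet> u) * (s \<bullet> u))
     = (p \<bullet> q) * (r \<bullet> s) + (p \<bullet> r) * (q \<bullet> s) + (p \<bullet> s) * (q \<bullet> r)" .
qed

lemma mat_vec_meas[measurable (raw)]:
  fixes A :: "real^'n::finite^'m::finite"
  shows "f \<in> borel_measurable M \<Longrightarrow> (\<lambda>x. A *v f x) \<in> borel_measurable M"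
  using measurable_compose[OF _ mat_vec_borel] by blast

lemma inner_transpose_mv:
  fixes A :: "real^'n::finite^'m::finite"
  shows "x \<bullet> (transpose A *v y) = (A *v x) \<bullet> y"
proof -
  have "x \<bullet> (transpose A *v y) = (\<Sum>i\<in>UNIV. \<Sum>j\<in>UNIV. x$i * A$j$i * y$j)"
    by (simp add: inner_vec_def matrix_vector_mult_def transpose_def sum_distrib_left mult.assoc)
  also have "\<dots> = (\<Sum>j\<in>UNIV. \<Sum>i\<in>UNIV. x$i * A$j$i * y$j)" by (rule sum.swap)
  also have "\<dots> = (A *v x) \<bullet> y"
    by (simp add: inner_vec_def matrix_vector_mult_def sum_distrib_right sum_distrib_left mult_ac)
  finally show ?thesis .
qed

lemma matrix_inv_unique:
  fixes A B :: "real^'n::finite^'n"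
  assumes "invertible A" "A ** B = mat 1"
  shows "matrix_inv A = B"
proof -
  have "matrix_inv A = matrix_inv A ** (A ** B)" using assms(2) by simp
  also have "\<dots> = (matrix_inv A ** A) ** B" by (simp add: matrix_mul_assoc)
  also have "\<dots> = B" using matrix_inv_both[OF assms(1)] by simp
  finally show ?thesis .
qed

lemma phi_d_eq: "phi_d (u::real^'n::finite) = exp (- (u \<bullet> u) / 2) / sqrt (2 * pi) ^ CARD('n)"
proof -
  have "phi_d u = (\<Prod>i\<in>UNIV. (1 / sqrt (2 * pi)) * exp (- (u$i)\<^sup>2 / 2))"
    unfolding phi_d_def std_normal_density_def normal_density_def by simp
  also have "\<dots> = (\<Prod>i\<in>(UNIV::'n set). 1 / sqrt (2 * pi)) * (\<Prod>i\<in>UNIV. exp (- (u$i)\<^sup>2 / 2))"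
    by (simp only: prod.distrib)
  also have "\<dots> = (1 / sqrt (2 * pi)) ^ CARD('n) * exp (\<Sum>i\<in>UNIV. - (u$i)\<^sup>2 / 2)"
    by (simp only: prod_constant exp_sum[OF finite_class.finite_UNIV])
  also have "(\<Sum>i\<in>UNIV. - (u$i)\<^sup>2 / 2) = - (u \<bullet> u) / 2"
    by (simp add: inner_vec_def power2_eq_square sum_divide_distrib sum_negf)
  finally show ?thesis by (simp add: power_one_over)
qed

lemma gauss_at:
  fixes L :: "real^'n::finite^'n"
  assumes SL: "S = L ** transpose L" and invL: "invertible L"
  shows "gauss_density mu S (mu + L *v u) = phi_d u / \<bar>det L\<bar>"
proof -
  define R where "R = matrix_inv L"
  have LR: "L ** R = mat 1" "R ** L = mat 1" using matrix_inv_both[OF invL] R_def by auto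
  have invS: "invertible S"
    unfolding SL by (intro invertible_mult invL transpose_invertible)
  have SR: "S ** (transpose R ** R) = mat 1"
  proof -
    have "S ** (transpose R ** R) = L ** (transpose (R ** L)) ** R"
      unfolding SL by (simp add: matrix_mul_assoc matrix_transpose_mul)
    also have "\<dots> = mat 1" using LR by (simp add: transpose_mat)
    finally show ?thesis .
  qed
  have Sinv: "matrix_inv S = transpose R ** R" by (rule matrix_inv_unique[OF invS SR])
  have quad: "(L *v u) \<bullet> (matrix_inv S *v (L *v u)) = u \<bullet> u"
  proof -
    have RLu: "R *v (L *v u) = u" by (simp add: matrix_vector_mul_assoc LR)
    have "matrix_inv S *v (L *v u) = transpose R *v (R *v (L *v u))"
      unfolding Sinv by (simp only: matrix_vector_mul_assoc matrix_mul_assoc)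
    then have "matrix_inv S *v (L *v u) = transpose R *v u" using RLu by simp
    then have "(L *v u) \<bullet> (matrix_inv S *v (L *v u)) = (L *v u) \<bullet> (transpose R *v u)"
      by simp
    also have "\<dots> = (R *v (L *v u)) \<bullet> u" by (rule inner_transpose_mv)
    also have "R *v (L *v u) = u" by (simp add: matrix_vector_mul_assoc LR)
    finally show ?thesis .
  qed
  have detS: "det S = (det L)\<^sup>2" unfolding SL by (simp add: det_mul power2_eq_square)
  have dL: "det L \<noteq> 0" using invL invertible_det_nz by blast
  have sq: "sqrt ((2 * pi) ^ CARD('n) * det S) = sqrt (2 * pi) ^ CARD('n) * \<bar>det L\<bar>"
  proof -
    have "sqrt ((det L)\<^sup>2) = \<bar>det L\<bar>" by (rule real_sqrt_abs)
    moreover have "sqrt ((2 * pi) ^ CARD('n)) = sqrt (2 * pi) ^ CARD('n)" by (rule real_sqrt_power)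
    ultimately show ?thesis unfolding detS real_sqrt_mult by simp
  qed
  show ?thesis
    unfolding gauss_density_def phi_d_eq sq using quad dL by (simp add: field_simps)
qed

lemma gauss_meas[measurable]: "gauss_density mu S \<in> borel_measurable borel"
  unfolding gauss_density_def by measurable

lemma sets_mvn[simp, measurable_cong]: "sets (mvn mu S) = sets borel"
  unfolding mvn_def by simp

lemma space_mvn[simp]: "space (mvn mu S) = UNIV"
  unfolding mvn_def by simp

lemma mvn_distr:
  fixes L :: "real^'n::finite^'n"
  assumes SL: "S = L ** transpose L" and invL: "invertible L"
  shows "mvn mu S = distr stdN borel (\<lambda>u. mu + L *v u)"
proof (rule measure_eqI)
  show "sets (mvn mu S) = sets (distr stdN borel (\<lambda>u. mu + L *v u))" by simp
next
  fix A assume "A \<in> sets (mvn mu S)"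
  then have A[measurable]: "A \<in> sets borel" by simp
  have dL: "det L \<noteq> 0" using invL invertible_det_nz by blast
  have "emeasure (mvn mu S) A = (\<integral>\<^sup>+v. ennreal (gauss_density mu S v) * indicator A v \<partial>lborel)"
    unfolding mvn_def by (simp add: emeasure_density)
  also have "\<dots> = ennreal \<bar>det L\<bar> * (\<integral>\<^sup>+u. ennreal (gauss_density mu S (mu + L *v u)) * indicator A (mu + L *v u) \<partial>lborel)"
    by (rule nn_integral_lborel_affine_mat[OF invL]) measurable
  also have "\<dots> = (\<integral>\<^sup>+u. ennreal \<bar>det L\<bar> * (ennreal (gauss_density mu S (mu + L *v u)) * indicator A (mu + L *v u)) \<partial>lborel)"
    by (rule nn_integral_cmult[symmetric]) measurable
  also have "\<dots> = (\<integral>\<^sup>+u. ennreal (phi_d u) * indicator A (mu + L *v u) \<partial>lborel)"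
  proof (intro nn_integral_cong)
    fix u
    have "\<bar>det L\<bar> * gauss_density mu S (mu + L *v u) = phi_d u"
      using gauss_at[OF SL invL] dL by simp
    then show "ennreal \<bar>det L\<bar> * (ennreal (gauss_density mu S (mu + L *v u)) * indicator A (mu + L *v u))
        = ennreal (phi_d u) * indicator A (mu + L *v u)"
      by (simp add: ennreal_mult'[symmetric] mult.assoc[symmetric])
  qed
  also have "\<dots> = emeasure (distr stdN borel (\<lambda>u. mu + L *v u)) A"
  proof -
    have pre: "(\<lambda>u. mu + L *v u) -` A \<in> sets borel"
      using measurable_sets_borel[of "\<lambda>u. mu + L *v u" borel A] by simp
    have "emeasure (distr stdN borel (\<lambda>u. mu + L *v u)) A = emeasure stdN ((\<lambda>u. mu + L *v u) -` A)"
      by (subst emeasure_distr) auto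
    also have "\<dots> = (\<integral>\<^sup>+u. ennreal (phi_d u) * indicator ((\<lambda>u. mu + L *v u) -` A) u \<partial>lborel)"
      unfolding stdN_density using pre by (simp add: emeasure_density)
    also have "\<dots> = (\<integral>\<^sup>+u. ennreal (phi_d u) * indicator A (mu + L *v u) \<partial>lborel)"
      by (intro nn_integral_cong) (simp split: split_indicator)
    finally show ?thesis by simp
  qed
  finally show "emeasure (mvn mu S) A = emeasure (distr stdN borel (\<lambda>u. mu + L *v u)) A" .
qed


lemma prob_space_mvn:
  fixes S :: "real^'n::finite^'n"
  assumes "pos_def_mat S"
  shows "prob_space (mvn mu S)"
proof -
  obtain L :: "real^'n^'n" where L: "S = L ** transpose L" "invertible L" using pd_factor[OF assms] by blast
  interpret P: prob_space "stdN :: (real^'n) measure" by (rule prob_space_stdN)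
  show ?thesis unfolding mvn_distr[OF L] by (rule P.prob_space_distr) simp
qed

lemma mvn_integral_L:
  fixes L :: "real^'n::finite^'n" and f :: "real^'n \<Rightarrow> real"
  assumes L: "S = L ** transpose L" "invertible L" and f[measurable]: "f \<in> borel_measurable borel"
  shows "integrable (mvn mu S) f \<longleftrightarrow> integrable stdN (\<lambda>u. f (mu + L *v u))"
    and "integral\<^sup>L (mvn mu S) f = integral\<^sup>L stdN (\<lambda>u. f (mu + L *v u))"
proof -
  show "integrable (mvn mu S) f \<longleftrightarrow> integrable stdN (\<lambda>u. f (mu + L *v u))"
    unfolding mvn_distr[OF L] using integrable_distr_eq[of "\<lambda>u. mu + L *v u" stdN borel f] by simp
  show "integral\<^sup>L (mvn mu S) f = integral\<^sup>L stdN (\<lambda>u. f (mu + L *v u))"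
    unfolding mvn_distr[OF L] using integral_distr[of "\<lambda>u. mu + L *v u" stdN borel f] by simp
qed

lemma inner_L: "a \<bullet> (L *v u) = (transpose L *v a) \<bullet> (u::real^'n::finite)" for L :: "real^'n^'n"
  using inner_transpose_mv[of a "transpose L" u] by simp

lemma inner_LL: "(transpose L *v a) \<bullet> (transpose L *v b) = a \<bullet> ((L ** transpose L) *v (b::real^'n::finite))"
  for L :: "real^'n^'n"
  by (simp only: inner_L[symmetric] matrix_vector_mul_assoc)

lemma mvn_lin2:
  fixes S :: "real^'n::finite^'n"
  assumes "pos_def_mat S"
  shows "integrable (mvn mu S) (\<lambda>v. (a \<bullet> v) * (b \<bullet> v))"
    and "integral\<^sup>L (mvn mu S) (\<lambda>v. (a \<bullet> v) * (b \<bullet> v)) = a \<bullet> (S *v b) + (a \<bullet> mu) * (b \<bullet> mu)"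
proof -
  obtain L :: "real^'n^'n" where L: "S = L ** transpose L" "invertible L" using pd_factor[OF assms] by blast
  interpret P: prob_space "stdN :: (real^'n) measure" by (rule prob_space_stdN)
  define p where "p = transpose L *v a"
  define q where "q = transpose L *v b"
  have eq: "(\<lambda>u. (a \<bullet> (mu + L *v u)) * (b \<bullet> (mu + L *v u))) =
     (\<lambda>u. (a \<bullet> mu) * (b \<bullet> mu) + (a \<bullet> mu) * (q \<bullet> u) + (b \<bullet> mu) * (p \<bullet> u) + (p \<bullet> u) * (q \<bullet> u))"
    by (auto simp: p_def q_def inner_add_right inner_L algebra_simps)
  have i1: "integrable stdN (\<lambda>u::real^'n. (a \<bullet> mu) * (b \<bullet> mu) + (a \<bullet> mu) * (q \<bullet> u) + (b \<bullet> mu) * (p \<bullet> u) + (p \<bullet> u) * (q \<bullet> u))"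
    by (intro Bochner_Integration.integrable_add integrable_mult_right stdN_lin1 stdN_lin2 P.integrable_const)
  show "integrable (mvn mu S) (\<lambda>v. (a \<bullet> v) * (b \<bullet> v))"
    by (subst mvn_integral_L[OF L]) (simp_all add: eq i1)
  have "integral\<^sup>L (mvn mu S) (\<lambda>v. (a \<bullet> v) * (b \<bullet> v)) =
      integral\<^sup>L stdN (\<lambda>u::real^'n. (a \<bullet> mu) * (b \<bullet> mu) + (a \<bullet> mu) * (q \<bullet> u) + (b \<bullet> mu) * (p \<bullet> u) + (p \<bullet> u) * (q \<bullet> u))"
    by (subst mvn_integral_L[OF L]) (simp_all add: eq)
  also have "\<dots> = (a \<bullet> mu) * (b \<bullet> mu) + p \<bullet> q"
  proof -
    have pu: "P.prob UNIV = 1" using P.prob_space by simp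
    show ?thesis by (simp add: stdN_lin1 stdN_lin2 P.integrable_const integrable_mult_right pu)
  qed
  also have "p \<bullet> q = a \<bullet> (S *v b)" unfolding p_def q_def inner_LL L(1) ..
  finally show "integral\<^sup>L (mvn mu S) (\<lambda>v. (a \<bullet> v) * (b \<bullet> v)) = a \<bullet> (S *v b) + (a \<bullet> mu) * (b \<bullet> mu)"
    by simp
qed

lemma mvn_lin4:
  fixes S :: "real^'n::finite^'n"
  assumes "pos_def_mat S"
  shows "integrable (mvn 0 S) (\<lambda>v. (a \<bullet> v) * (b \<bullet> v) * (c \<bullet> v) * (e \<bullet> v))"
    and "integral\<^sup>L (mvn 0 S) (\<lambda>v. (a \<bullet> v) * (b \<bullet> v) * (c \<bullet> v) * (e \<bullet> v)) =
       (a \<bullet> (S *v b)) * (c \<bullet> (S *v e)) + (a \<bullet> (S *v c)) * (b \<bullet> (S *v e)) + (a \<bullet> (S *v e)) * (b \<bullet> (S *v c))"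
proof -
  obtain L :: "real^'n^'n" where L: "S = L ** transpose L" "invertible L" using pd_factor[OF assms] by blast
  have eq: "(\<lambda>u. (a \<bullet> (0 + L *v u)) * (b \<bullet> (0 + L *v u)) * (c \<bullet> (0 + L *v u)) * (e \<bullet> (0 + L *v u))) =
     (\<lambda>u. ((transpose L *v a) \<bullet> u) * ((transpose L *v b) \<bullet> u) * ((transpose L *v c) \<bullet> u) * ((transpose L *v e) \<bullet> u))"
    by (simp add: inner_L)
  show "integrable (mvn 0 S) (\<lambda>v. (a \<bullet> v) * (b \<bullet> v) * (c \<bullet> v) * (e \<bullet> v))"
    by (subst mvn_integral_L[OF L]) (simp_all only: eq stdN_lin4 borel_measurable_inner borel_measurable_times
        measurable_ident_sets refl borel_measurable_const)
  have "integral\<^sup>L (mvn 0 S) (\<lambda>v. (a \<bullet> v) * (b \<bullet> v) * (c \<bullet> v) * (e \<bullet> v)) =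
     integral\<^sup>L stdN (\<lambda>u. ((transpose L *v a) \<bullet> u) * ((transpose L *v b) \<bullet> u) * ((transpose L *v c) \<bullet> u) * ((transpose L *v e) \<bullet> u))"
    by (subst mvn_integral_L[OF L]) (simp_all only: eq borel_measurable_inner borel_measurable_times
        measurable_ident_sets refl borel_measurable_const)
  also have "\<dots> = (a \<bullet> (S *v b)) * (c \<bullet> (S *v e)) + (a \<bullet> (S *v c)) * (b \<bullet> (S *v e)) + (a \<bullet> (S *v e)) * (b \<bullet> (S *v c))"
    unfolding stdN_lin4 inner_LL L(1) ..
  finally show "integral\<^sup>L (mvn 0 S) (\<lambda>v. (a \<bullet> v) * (b \<bullet> v) * (c \<bullet> v) * (e \<bullet> v)) =
       (a \<bullet> (S *v b)) * (c \<bullet> (S *v e)) + (a \<bullet> (S *v c)) * (b \<bullet> (S *v e)) + (a \<bullet> (S *v e)) * (b \<bullet> (S *v c))" .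
qed

lemma inner_axis_left: "axis a 1 \<bullet> x = (x::real^'n::finite) $ a"
  by (simp add: cart_eq_inner_axis inner_commute)

lemma mv_comp: "(A *v x) $ a = (transpose A *v axis a 1) \<bullet> (x::real^'n::finite)" for A :: "real^'n^'m::finite"
proof -
  have "(A *v x) $ a = axis a 1 \<bullet> (transpose (transpose A) *v x)" by (simp only: inner_axis_left transpose_transpose)
  also have "\<dots> = (transpose A *v axis a 1) \<bullet> x" by (rule inner_transpose_mv)
  finally show ?thesis .
qed

lemma diag_axis: "axis a 1 \<bullet> (A *v (B *v axis a 1)) = (A ** B) $ a $ a" for A B :: "real^'n::finite^'n"
  unfolding inner_axis_left matrix_vector_mult_basis column_def
  by (simp add: matrix_vector_mult_def matrix_matrix_mult_def)

lemma inner_sum_coords: "x \<bullet> y = (\<Sum>a\<in>UNIV. (axis a 1 \<bullet> x) * (axis a 1 \<bullet> (y::real^'n::finite)))"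
  unfolding inner_axis_left by (simp add: inner_vec_def)

lemma sym_inner: "pos_def_mat S \<Longrightarrow> x \<bullet> (S *v y) = y \<bullet> (S *v x)"
  unfolding pos_def_mat_def by (intro inner_mat_sym) auto

lemma psd_nonneg: "pos_def_mat S \<Longrightarrow> 0 \<le> x \<bullet> (S *v x)"
  unfolding pos_def_mat_def by (cases "x = 0") (auto intro: less_imp_le)

lemma PiM_prod_two:
  fixes f g :: "'a \<Rightarrow> real"
  assumes P: "prob_space M" and I: "finite I" "i \<in> I" "j \<in> I" "i \<noteq> j"
    and f: "integrable M f" and g: "integrable M g"
  shows "integrable (PiM I (\<lambda>_. M)) (\<lambda>X. f (X i) * g (X j))"
    and "integral\<^sup>L (PiM I (\<lambda>_. M)) (\<lambda>X. f (X i) * g (X j)) = integral\<^sup>L M f * integral\<^sup>L M g"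
proof -
  interpret P: prob_space M by (rule P)
  interpret product_sigma_finite "\<lambda>_::'b. M"
    unfolding product_sigma_finite_def using P.sigma_finite_measure_axioms by blast
  define h where "h k = (if k = i then f else if k = j then g else (\<lambda>_. 1))" for k
  have hint: "integrable M (h k)" for k using f g by (auto simp: h_def)
  have eq: "(\<Prod>k\<in>I. h k (X k)) = f (X i) * g (X j)" for X
  proof -
    have "(\<Prod>k\<in>I. h k (X k)) = (\<Prod>k\<in>I. (if k = i then f (X k) else 1) * (if k = j then g (X k) else 1))"
      using I(4) by (intro prod.cong) (auto simp: h_def)
    also have "\<dots> = f (X i) * g (X j)" using I by (simp add: prod.distrib prod.delta)
    finally show ?thesis .
  qed
  have eq2: "(\<Prod>k\<in>I. integral\<^sup>L M (h k)) = integral\<^sup>L M f * integral\<^sup>L M g"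
  proof -
    have "(\<Prod>k\<in>I. integral\<^sup>L M (h k)) = (\<Prod>k\<in>I. (if k = i then integral\<^sup>L M f else 1) * (if k = j then integral\<^sup>L M g else 1))"
      using I(4) by (intro prod.cong) (auto simp: h_def P.prob_space)
    also have "\<dots> = integral\<^sup>L M f * integral\<^sup>L M g" using I by (simp add: prod.distrib prod.delta)
    finally show ?thesis .
  qed
  show "integrable (PiM I (\<lambda>_. M)) (\<lambda>X. f (X i) * g (X j))"
    using product_integrable_prod[OF I(1), of h] hint by (simp add: eq)
  show "integral\<^sup>L (PiM I (\<lambda>_. M)) (\<lambda>X. f (X i) * g (X j)) = integral\<^sup>L M f * integral\<^sup>L M g"
    using product_integral_prod[OF I(1), of h] hint by (simp add: eq eq2)
qed

lemma PiM_one: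
  fixes f :: "'a \<Rightarrow> real"
  assumes P: "prob_space M" and I: "finite I" "i \<in> I" and f: "integrable M f"
  shows "integrable (PiM I (\<lambda>_. M)) (\<lambda>X. f (X i))"
    and "integral\<^sup>L (PiM I (\<lambda>_. M)) (\<lambda>X. f (X i)) = integral\<^sup>L M f"
proof -
  interpret P: prob_space M by (rule P)
  interpret product_sigma_finite "\<lambda>_::'b. M"
    unfolding product_sigma_finite_def using P.sigma_finite_measure_axioms by blast
  define h where "h k = (if k = i then f else (\<lambda>_. 1))" for k
  have hint: "integrable M (h k)" for k using f by (auto simp: h_def)
  have eq: "(\<Prod>k\<in>I. h k (X k)) = f (X i)" for X
  proof -
    have "(\<Prod>k\<in>I. h k (X k)) = (\<Prod>k\<in>I. (if k = i then f (X k) else 1))"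
      by (intro prod.cong) (auto simp: h_def)
    also have "\<dots> = f (X i)" using I by (simp add: prod.delta)
    finally show ?thesis .
  qed
  have eq2: "(\<Prod>k\<in>I. integral\<^sup>L M (h k)) = integral\<^sup>L M f"
  proof -
    have "(\<Prod>k\<in>I. integral\<^sup>L M (h k)) = (\<Prod>k\<in>I. (if k = i then integral\<^sup>L M f else 1))"
      by (intro prod.cong) (auto simp: h_def P.prob_space)
    also have "\<dots> = integral\<^sup>L M f" using I by (simp add: prod.delta)
    finally show ?thesis .
  qed
  show "integrable (PiM I (\<lambda>_. M)) (\<lambda>X. f (X i))"
    using product_integrable_prod[OF I(1), of h] hint by (simp add: eq)
  show "integral\<^sup>L (PiM I (\<lambda>_. M)) (\<lambda>X. f (X i)) = integral\<^sup>L M f"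
    using product_integral_prod[OF I(1), of h] hint by (simp add: eq eq2)
qed


definition Zb :: "nat \<Rightarrow> real^'d::finite \<Rightarrow> (nat \<Rightarrow> real^'d) \<Rightarrow> real^'d" where
  "Zb n b X = (\<Sum>i<n. (X i \<bullet> b) *\<^sub>R X i)"

definition gW :: "real^'d::finite^'d \<Rightarrow> nat \<Rightarrow> real^'d \<Rightarrow> (nat \<Rightarrow> real^'d) \<Rightarrow> real^'d" where
  "gW W n b X = W *v Zb n b X - b"

lemma q_expand:
  fixes Sx W :: "real^'d::finite^'d"
  assumes pd: "pos_def_mat Sx"
  shows "gW W n b X \<bullet> (Sx *v gW W n b X) =
    (\<Sum>i<n. \<Sum>j<n. (b \<bullet> X i) * (b \<bullet> X j) * (X i \<bullet> ((transpose W ** Sx ** W) *v X j)))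
    - 2 * (\<Sum>i<n. (b \<bullet> X i) * ((transpose W *v (Sx *v b)) \<bullet> X i)) + b \<bullet> (Sx *v b)"
proof -
  define Z where "Z = Zb n b X"
  define B where "B = transpose W ** Sx ** W"
  define c where "c = transpose W *v (Sx *v b)"
  have BZ: "B *v y = transpose W *v (Sx *v (W *v y))" for y
    unfolding B_def by (simp add: matrix_vector_mul_assoc matrix_mul_assoc)
  have e1: "(W *v Z) \<bullet> (Sx *v (W *v Z)) = Z \<bullet> (B *v Z)"
    unfolding BZ by (rule inner_transpose_mv[symmetric])
  have e2: "(W *v Z) \<bullet> (Sx *v b) = Z \<bullet> c"
    unfolding c_def by (rule inner_transpose_mv[symmetric])
  have e3: "b \<bullet> (Sx *v (W *v Z)) = (W *v Z) \<bullet> (Sx *v b)" by (rule sym_inner[OF pd])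
  have g: "gW W n b X \<bullet> (Sx *v gW W n b X) = Z \<bullet> (B *v Z) - 2 * (Z \<bullet> c) + b \<bullet> (Sx *v b)"
    unfolding gW_def Z_def[symmetric]
    by (simp add: matrix_vector_mult_diff_distrib inner_diff_left inner_diff_right e1 e2 e3)
  have z1: "Z \<bullet> (B *v Z) = (\<Sum>i<n. \<Sum>j<n. (b \<bullet> X i) * (b \<bullet> X j) * (X i \<bullet> (B *v X j)))"
    unfolding Z_def Zb_def
    by (simp add: vec.sum matrix_vector_mult_scaleR inner_sum_left inner_sum_right sum_distrib_left
        inner_commute mult_ac) (subst sum.swap, simp add: mult_ac)
  have z2: "Z \<bullet> c = (\<Sum>i<n. (b \<bullet> X i) * (c \<bullet> X i))"
    unfolding Z_def Zb_def inner_sum_left by (intro sum.cong refl) (simp add: inner_commute)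
  show ?thesis using g z1 z2 by (simp add: B_def c_def)
qed

lemma prob_space_PiM_mvn:
  fixes Sx :: "real^'d::finite^'d"
  assumes "pos_def_mat Sx"
  shows "prob_space (PiM I (\<lambda>_. mvn 0 Sx))"
  by (rule prob_space_PiM) (rule prob_space_mvn[OF assms])

lemma xstage:
  fixes Sx W :: "real^'d::finite^'d" and b :: "real^'d"
  assumes pd: "pos_def_mat Sx"
  defines "B \<equiv> transpose W ** Sx ** W"
  defines "Of \<equiv> (\<Sum>a\<in>UNIV. (b \<bullet> (Sx *v axis a 1)) * (b \<bullet> (Sx *v (transpose B *v axis a 1))))"
  defines "Dg \<equiv> (\<Sum>a\<in>UNIV. (b \<bullet> (Sx *v b)) * (axis a 1 \<bullet> (Sx *v (transpose B *v axis a 1)))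
                 + 2 * ((b \<bullet> (Sx *v axis a 1)) * (b \<bullet> (Sx *v (transpose B *v axis a 1)))))"
  shows "integrable (PiM {..<n} (\<lambda>_. mvn 0 Sx)) (\<lambda>X. gW W n b X \<bullet> (Sx *v gW W n b X))"
    and "integral\<^sup>L (PiM {..<n} (\<lambda>_. mvn 0 Sx)) (\<lambda>X. gW W n b X \<bullet> (Sx *v gW W n b X)) =
       real n * Dg + (real n * real n - real n) * Of - 2 * real n * (b \<bullet> (Sx *v (transpose W *v (Sx *v b)))) + b \<bullet> (Sx *v b)"
proof -
  let ?M = "mvn 0 Sx"
  let ?P = "PiM {..<n} (\<lambda>_. ?M)"
  have PM: "prob_space ?M" by (rule prob_space_mvn[OF pd])
  interpret PP: prob_space ?P by (rule prob_space_PiM_mvn[OF pd])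
  define c where "c = transpose W *v (Sx *v b)"
  define T where "T i j X = (b \<bullet> X i) * (b \<bullet> X j) * (X i \<bullet> (B *v X j))" for i j and X :: "nat \<Rightarrow> real^'d"
  define ea where "ea a = (axis a 1 :: real^'d)" for a
  define fa where "fa a = transpose B *v ea a" for a
  have Tsplit: "T i j X = (\<Sum>a\<in>UNIV. ((b \<bullet> X i) * (ea a \<bullet> X i)) * ((b \<bullet> X j) * (fa a \<bullet> X j)))" for i j X
  proof -
    have "X i \<bullet> (B *v X j) = (\<Sum>a\<in>UNIV. (ea a \<bullet> X i) * (fa a \<bullet> X j))"
      unfolding inner_sum_coords[of "X i"] ea_def fa_def
      by (intro sum.cong refl) (simp add: inner_axis_left mv_comp)
    then show ?thesis unfolding T_def by (simp add: sum_distrib_left mult_ac)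
  qed
  have Tdiag: "T i i X = (\<Sum>a\<in>UNIV. (b \<bullet> X i) * (b \<bullet> X i) * (ea a \<bullet> X i) * (fa a \<bullet> X i))" for i X
    unfolding Tsplit by (intro sum.cong refl) (simp add: mult_ac)
  have Tint: "integrable ?P (T i j) \<and> integral\<^sup>L ?P (T i j) = (if i = j then Dg else Of)"
    if ij: "i < n" "j < n" for i j
  proof (cases "i = j")
    case True
    have fi: "integrable ?M (\<lambda>x. (b \<bullet> x) * (b \<bullet> x) * (ea a \<bullet> x) * (fa a \<bullet> x))" for a
      by (rule mvn_lin4[OF pd])
    have int1: "integrable ?P (\<lambda>X. (b \<bullet> X i) * (b \<bullet> X i) * (ea a \<bullet> X i) * (fa a \<bullet> X i))" for a
      using PiM_one(1)[OF PM _ _ fi[of a], of "{..<n}" i] ij by simp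
    have val1: "integral\<^sup>L ?P (\<lambda>X. (b \<bullet> X i) * (b \<bullet> X i) * (ea a \<bullet> X i) * (fa a \<bullet> X i)) =
        (b \<bullet> (Sx *v b)) * (ea a \<bullet> (Sx *v fa a)) + 2 * ((b \<bullet> (Sx *v ea a)) * (b \<bullet> (Sx *v fa a)))" for a
    proof -
      have "integral\<^sup>L ?P (\<lambda>X. (b \<bullet> X i) * (b \<bullet> X i) * (ea a \<bullet> X i) * (fa a \<bullet> X i))
          = integral\<^sup>L ?M (\<lambda>x. (b \<bullet> x) * (b \<bullet> x) * (ea a \<bullet> x) * (fa a \<bullet> x))"
        using PiM_one(2)[OF PM _ _ fi[of a], of "{..<n}" i] ij by simp
      also have "\<dots> = (b \<bullet> (Sx *v b)) * (ea a \<bullet> (Sx *v fa a)) + (b \<bullet> (Sx *v ea a)) * (b \<bullet> (Sx *v fa a))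
          + (b \<bullet> (Sx *v fa a)) * (b \<bullet> (Sx *v ea a))"
        by (rule mvn_lin4(2)[OF pd])
      finally show ?thesis by simp
    qed
    have "T i j = (\<lambda>X. \<Sum>a\<in>UNIV. (b \<bullet> X i) * (b \<bullet> X i) * (ea a \<bullet> X i) * (fa a \<bullet> X i))"
      using True Tdiag by auto
    moreover have "Dg = (\<Sum>a\<in>UNIV. (b \<bullet> (Sx *v b)) * (ea a \<bullet> (Sx *v fa a)) + 2 * ((b \<bullet> (Sx *v ea a)) * (b \<bullet> (Sx *v fa a))))"
      unfolding Dg_def ea_def fa_def ..
    ultimately show ?thesis using True int1 val1
      by (simp add: Bochner_Integration.integral_sum Bochner_Integration.integrable_sum)
  next
    case False
    have fi: "integrable ?M (\<lambda>x. (b \<bullet> x) * (ea a \<bullet> x))" for a by (rule mvn_lin2[OF pd])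
    have gi: "integrable ?M (\<lambda>x. (b \<bullet> x) * (fa a \<bullet> x))" for a by (rule mvn_lin2[OF pd])
    have int2: "integrable ?P (\<lambda>X. ((b \<bullet> X i) * (ea a \<bullet> X i)) * ((b \<bullet> X j) * (fa a \<bullet> X j)))" for a
      using PiM_prod_two(1)[OF PM _ _ _ False fi[of a] gi[of a]] ij by simp
    have val2: "integral\<^sup>L ?P (\<lambda>X. ((b \<bullet> X i) * (ea a \<bullet> X i)) * ((b \<bullet> X j) * (fa a \<bullet> X j)))
        = (b \<bullet> (Sx *v ea a)) * (b \<bullet> (Sx *v fa a))" for a
      using PiM_prod_two(2)[OF PM _ _ _ False fi[of a] gi[of a]] ij mvn_lin2(2)[OF pd] by simp
    have "T i j = (\<lambda>X. \<Sum>a\<in>UNIV. ((b \<bullet> X i) * (ea a \<bullet> X i)) * ((b \<bullet> X j) * (fa a \<bullet> X j)))"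
      using Tsplit by auto
    moreover have "Of = (\<Sum>a\<in>UNIV. (b \<bullet> (Sx *v ea a)) * (b \<bullet> (Sx *v fa a)))"
      unfolding Of_def ea_def fa_def ..
    ultimately show ?thesis using False int2 val2
      by (simp add: Bochner_Integration.integral_sum Bochner_Integration.integrable_sum)
  qed
  have cint: "integrable ?P (\<lambda>X. (b \<bullet> X i) * (c \<bullet> X i)) \<and> integral\<^sup>L ?P (\<lambda>X. (b \<bullet> X i) * (c \<bullet> X i)) = b \<bullet> (Sx *v c)"
    if "i < n" for i
  proof -
    have fi: "integrable ?M (\<lambda>x. (b \<bullet> x) * (c \<bullet> x))" by (rule mvn_lin2[OF pd])
    show ?thesis
      using PiM_one[OF PM _ _ fi, of "{..<n}" i] that mvn_lin2(2)[OF pd, where mu=0 and a=b and b=c] by simp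
  qed
  have qeq: "(\<lambda>X. gW W n b X \<bullet> (Sx *v gW W n b X)) =
      (\<lambda>X. (\<Sum>i<n. \<Sum>j<n. T i j X) - 2 * (\<Sum>i<n. (b \<bullet> X i) * (c \<bullet> X i)) + b \<bullet> (Sx *v b))"
    unfolding q_expand[OF pd] T_def B_def c_def ..
  have sT: "integrable ?P (\<lambda>X. \<Sum>i<n. \<Sum>j<n. T i j X)"
    using Tint by (intro Bochner_Integration.integrable_sum) auto
  have sC: "integrable ?P (\<lambda>X. \<Sum>i<n. (b \<bullet> X i) * (c \<bullet> X i))"
    using cint by (intro Bochner_Integration.integrable_sum) auto
  show "integrable ?P (\<lambda>X. gW W n b X \<bullet> (Sx *v gW W n b X))"
    unfolding qeq using sT sC by (intro Bochner_Integration.integrable_add Bochner_Integration.integrable_diff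
       integrable_mult_right PP.integrable_const)
  have iT: "integral\<^sup>L ?P (\<lambda>X. \<Sum>i<n. \<Sum>j<n. T i j X) = (\<Sum>i<n. \<Sum>j<n. (if i = j then Dg else Of))"
  proof -
    have inner_int: "integrable ?P (\<lambda>X. \<Sum>j<n. T i j X)" if "i < n" for i
      using Tint that by (intro Bochner_Integration.integrable_sum) auto
    have "integral\<^sup>L ?P (\<lambda>X. \<Sum>i<n. \<Sum>j<n. T i j X) = (\<Sum>i<n. integral\<^sup>L ?P (\<lambda>X. \<Sum>j<n. T i j X))"
      using inner_int by (intro Bochner_Integration.integral_sum) auto
    also have "\<dots> = (\<Sum>i<n. \<Sum>j<n. integral\<^sup>L ?P (T i j))"
    proof (intro sum.cong refl)
      fix i assume "i \<in> {..<n}"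
      then show "integral\<^sup>L ?P (\<lambda>X. \<Sum>j<n. T i j X) = (\<Sum>j<n. integral\<^sup>L ?P (T i j))"
        using Tint by (intro Bochner_Integration.integral_sum) auto
    qed
    also have "\<dots> = (\<Sum>i<n. \<Sum>j<n. (if i = j then Dg else Of))"
      using Tint by (intro sum.cong refl) auto
    finally show ?thesis .
  qed
  have sumif: "(\<Sum>i<n. \<Sum>j<n. (if i = j then Dg else Of)) = real n * Dg + (real n * real n - real n) * Of"
  proof -
    have "(\<Sum>j<n. (if i = j then Dg else Of)) = Dg + (real n - 1) * Of" if "i < n" for i
    proof -
      have "(\<Sum>j<n. (if i = j then Dg else Of)) = (\<Sum>j<n. Of + (if i = j then Dg - Of else 0))"
        by (intro sum.cong) auto
      also have "\<dots> = real n * Of + (Dg - Of)" using that by (simp add: sum.distrib)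
      finally show ?thesis by (simp add: algebra_simps)
    qed
    then have "(\<Sum>i<n. \<Sum>j<n. (if i = j then Dg else Of)) = (\<Sum>i<n. Dg + (real n - 1) * Of)"
      by (intro sum.cong) auto
    also have "\<dots> = real n * Dg + (real n * real n - real n) * Of" by (simp add: algebra_simps)
    finally show ?thesis .
  qed
  have iC: "integral\<^sup>L ?P (\<lambda>X. \<Sum>i<n. (b \<bullet> X i) * (c \<bullet> X i)) = real n * (b \<bullet> (Sx *v c))"
  proof -
    have "integral\<^sup>L ?P (\<lambda>X. \<Sum>i<n. (b \<bullet> X i) * (c \<bullet> X i)) = (\<Sum>i<n. integral\<^sup>L ?P (\<lambda>X. (b \<bullet> X i) * (c \<bullet> X i)))"
      using cint by (simp add: Bochner_Integration.integral_sum)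
    also have "\<dots> = (\<Sum>i<n. b \<bullet> (Sx *v c))" using cint by (intro sum.cong refl) auto
    finally show ?thesis by simp
  qed
  have pu: "PP.prob (space ?P) = 1" by (rule PP.prob_space)
  show "integral\<^sup>L ?P (\<lambda>X. gW W n b X \<bullet> (Sx *v gW W n b X)) =
       real n * Dg + (real n * real n - real n) * Of - 2 * real n * (b \<bullet> (Sx *v (transpose W *v (Sx *v b)))) + b \<bullet> (Sx *v b)"
    unfolding qeq
    apply (subst Bochner_Integration.integral_add)
      apply (intro Bochner_Integration.integrable_diff integrable_mult_right sT sC)
     apply (rule PP.integrable_const)
    apply (subst Bochner_Integration.integral_diff)
      apply (rule sT)
     apply (intro integrable_mult_right sC)
    using iT sumif iC pu by (simp add: c_def)
qed

definition Qmat :: "nat \<Rightarrow> real^'d::finite^'d \<Rightarrow> real^'d^'d \<Rightarrow> real^'d^'d" where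
  "Qmat n Sx W = (real n * real n + real n) *\<^sub>R (Sx ** (transpose W ** Sx ** W) ** Sx)
     + (real n * trace (Sx ** transpose (transpose W ** Sx ** W))) *\<^sub>R Sx
     - (2 * real n) *\<^sub>R (Sx ** transpose W ** Sx) + Sx"

lemma xstage_Q:
  fixes Sx W :: "real^'d::finite^'d" and b :: "real^'d"
  assumes pd: "pos_def_mat Sx"
  shows "integrable (PiM {..<n} (\<lambda>_. mvn 0 Sx)) (\<lambda>X. gW W n b X \<bullet> (Sx *v gW W n b X))"
    and "integral\<^sup>L (PiM {..<n} (\<lambda>_. mvn 0 Sx)) (\<lambda>X. gW W n b X \<bullet> (Sx *v gW W n b X)) = b \<bullet> (Qmat n Sx W *v b)"
proof -
  define B where "B = transpose W ** Sx ** W"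
  define Of where "Of = (\<Sum>a\<in>UNIV. (b \<bullet> (Sx *v axis a 1)) * (b \<bullet> (Sx *v (transpose B *v axis a 1))))"
  define Dg where "Dg = (\<Sum>a\<in>UNIV. (b \<bullet> (Sx *v b)) * (axis a 1 \<bullet> (Sx *v (transpose B *v axis a 1)))
                 + 2 * ((b \<bullet> (Sx *v axis a 1)) * (b \<bullet> (Sx *v (transpose B *v axis a 1)))))"
  show "integrable (PiM {..<n} (\<lambda>_. mvn 0 Sx)) (\<lambda>X. gW W n b X \<bullet> (Sx *v gW W n b X))"
    by (rule xstage(1)[OF pd])
  have X: "integral\<^sup>L (PiM {..<n} (\<lambda>_. mvn 0 Sx)) (\<lambda>X. gW W n b X \<bullet> (Sx *v gW W n b X)) =
       real n * Dg + (real n * real n - real n) * Of - 2 * real n * (b \<bullet> (Sx *v (transpose W *v (Sx *v b)))) + b \<bullet> (Sx *v b)"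
    unfolding Dg_def Of_def B_def by (rule xstage(2)[OF pd])
  have Of': "Of = b \<bullet> ((Sx ** B ** Sx) *v b)"
  proof -
    have t1: "b \<bullet> (Sx *v axis a 1) = (Sx *v b) $ a" for a
      using sym_inner[OF pd, of b "axis a 1"] by (simp add: inner_axis_left)
    have t2: "b \<bullet> (Sx *v (transpose B *v axis a 1)) = (B *v (Sx *v b)) $ a" for a
    proof -
      have "b \<bullet> (Sx *v (transpose B *v axis a 1)) = (transpose B *v axis a 1) \<bullet> (Sx *v b)"
        by (rule sym_inner[OF pd])
      also have "\<dots> = (Sx *v b) \<bullet> (transpose B *v axis a 1)" by (rule inner_commute)
      also have "\<dots> = (B *v (Sx *v b)) \<bullet> axis a 1" by (rule inner_transpose_mv)
      finally show ?thesis by (simp add: cart_eq_inner_axis)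
    qed
    have "Of = (Sx *v b) \<bullet> (B *v (Sx *v b))"
      unfolding Of_def t1 t2 by (simp add: inner_vec_def)
    also have "\<dots> = b \<bullet> (Sx *v (B *v (Sx *v b)))"
      using sym_inner[OF pd, of "B *v (Sx *v b)" b] by (simp add: inner_commute)
    also have "\<dots> = b \<bullet> ((Sx ** B ** Sx) *v b)" by (simp add: matrix_vector_mul_assoc matrix_mul_assoc)
    finally show ?thesis .
  qed
  have tr: "(\<Sum>a\<in>UNIV. axis a 1 \<bullet> (Sx *v (transpose B *v axis a 1))) = trace (Sx ** transpose B)"
    unfolding diag_axis trace_def ..
  have Dg': "Dg = (b \<bullet> (Sx *v b)) * trace (Sx ** transpose B) + 2 * Of"
    unfolding Dg_def Of_def tr[symmetric] by (simp add: sum.distrib sum_distrib_left)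
  have W': "b \<bullet> (Sx *v (transpose W *v (Sx *v b))) = b \<bullet> ((Sx ** transpose W ** Sx) *v b)"
    by (simp add: matrix_vector_mul_assoc matrix_mul_assoc)
  have Qb: "b \<bullet> (Qmat n Sx W *v b) = (real n * real n + real n) * (b \<bullet> ((Sx ** B ** Sx) *v b))
     + (real n * trace (Sx ** transpose B)) * (b \<bullet> (Sx *v b))
     - (2 * real n) * (b \<bullet> ((Sx ** transpose W ** Sx) *v b)) + b \<bullet> (Sx *v b)"
    unfolding Qmat_def B_def
    by (simp add: matrix_vector_mult_diff_rdistrib matrix_vector_mult_add_rdistrib inner_add_right inner_diff_right
        scaleR_matrix_vector_assoc[symmetric])
  show "integral\<^sup>L (PiM {..<n} (\<lambda>_. mvn 0 Sx)) (\<lambda>X. gW W n b X \<bullet> (Sx *v gW W n b X)) = b \<bullet> (Qmat n Sx W *v b)"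
    unfolding X Qb Dg' Of' W' by (simp add: algebra_simps)
qed

lemma bstage:
  fixes Sb Q :: "real^'d::finite^'d"
  assumes pd: "pos_def_mat Sb"
  shows "integrable (mvn mu Sb) (\<lambda>b. b \<bullet> (Q *v b))"
    and "integral\<^sup>L (mvn mu Sb) (\<lambda>b. b \<bullet> (Q *v b)) = trace (Sb ** transpose Q) + mu \<bullet> (Q *v mu)"
proof -
  have eq: "(\<lambda>b. b \<bullet> (Q *v b)) = (\<lambda>b. \<Sum>a\<in>UNIV. (axis a 1 \<bullet> b) * ((transpose Q *v axis a 1) \<bullet> b))"
    by (rule ext, subst inner_sum_coords) (simp add: inner_axis_left mv_comp)
  show "integrable (mvn mu Sb) (\<lambda>b. b \<bullet> (Q *v b))"
    unfolding eq by (intro Bochner_Integration.integrable_sum mvn_lin2(1)[OF pd])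
  have "integral\<^sup>L (mvn mu Sb) (\<lambda>b. b \<bullet> (Q *v b)) =
      (\<Sum>a\<in>UNIV. axis a 1 \<bullet> (Sb *v (transpose Q *v axis a 1)) + (axis a 1 \<bullet> mu) * ((transpose Q *v axis a 1) \<bullet> mu))"
    unfolding eq by (simp add: Bochner_Integration.integral_sum mvn_lin2[OF pd])
  also have "\<dots> = trace (Sb ** transpose Q) + mu \<bullet> (Q *v mu)"
  proof -
    have "(\<Sum>a\<in>UNIV. axis a 1 \<bullet> (Sb *v (transpose Q *v axis a 1))) = trace (Sb ** transpose Q)"
      unfolding diag_axis trace_def ..
    moreover have "(\<Sum>a\<in>UNIV. (axis a 1 \<bullet> mu) * ((transpose Q *v axis a 1) \<bullet> mu)) = mu \<bullet> (Q *v mu)"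
      by (subst inner_sum_coords[of mu]) (simp add: inner_axis_left mv_comp)
    ultimately show ?thesis by (simp add: sum.distrib)
  qed
  finally show "integral\<^sup>L (mvn mu Sb) (\<lambda>b. b \<bullet> (Q *v b)) = trace (Sb ** transpose Q) + mu \<bullet> (Q *v mu)" .
qed


lemma F_meas:
  fixes Sx Sb W :: "real^'d::finite^'d"
  shows "(\<lambda>z. (predictor n W 0 (fst z) (snd z) - snd z n \<bullet> fst z)\<^sup>2)
     \<in> borel_measurable (mvn mu Sb \<Otimes>\<^sub>M PiM {..n} (\<lambda>_. mvn 0 Sx))"
  unfolding predictor_def by measurable


lemma F_upd:
  fixes W :: "real^'d::finite^'d"
  shows "(predictor n W 0 b (X(n := y)) - (X(n := y)) n \<bullet> b)\<^sup>2 = (gW W n b X \<bullet> y) * (gW W n b X \<bullet> y)"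
proof -
  have "(\<Sum>i<n. ((X(n := y)) i \<bullet> b) *\<^sub>R (X(n := y)) i) = Zb n b X"
    unfolding Zb_def by (intro sum.cong refl) auto
  then have "predictor n W 0 b (X(n := y)) - (X(n := y)) n \<bullet> b = y \<bullet> gW W n b X"
    unfolding predictor_def gW_def by (simp add: inner_diff_right)
  then show ?thesis by (simp add: power2_eq_square inner_commute)
qed

lemma task_loss:
  fixes Sx Sb W :: "real^'d::finite^'d"
  assumes pdx: "pos_def_mat Sx" and pdb: "pos_def_mat Sb"
  shows "integral\<^sup>L (task_measure n Sx mu Sb) (\<lambda>z. (predictor n W 0 (fst z) (snd z) - snd z n \<bullet> fst z)\<^sup>2)
        = trace (Sb ** transpose (Qmat n Sx W)) + mu \<bullet> (Qmat n Sx W *v mu)"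
proof -
  let ?F = "\<lambda>z. (predictor n W 0 (fst z) (snd z) - snd z n \<bullet> fst z)\<^sup>2"
  let ?M1 = "mvn mu Sb"
  let ?M0 = "mvn 0 Sx"
  let ?M2 = "PiM {..n} (\<lambda>_. ?M0)"
  let ?P = "PiM {..<n} (\<lambda>_. ?M0)"
  define Q where "Q = Qmat n Sx W"
  interpret M1: prob_space ?M1 by (rule prob_space_mvn[OF pdb])
  interpret M0: prob_space ?M0 by (rule prob_space_mvn[OF pdx])
  interpret M2: prob_space ?M2 by (rule prob_space_PiM_mvn[OF pdx])
  interpret PS: product_sigma_finite "\<lambda>_::nat. ?M0"
    unfolding product_sigma_finite_def using M0.sigma_finite_measure_axioms by blast
  have Fm: "?F \<in> borel_measurable (?M1 \<Otimes>\<^sub>M ?M2)" by (rule F_meas)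
  have inner: "(\<integral>\<^sup>+ y. ennreal (?F (b, X(n := y))) \<partial>?M0) = ennreal (gW W n b X \<bullet> (Sx *v gW W n b X))" for b X
  proof -
    have "(\<integral>\<^sup>+ y. ennreal (?F (b, X(n := y))) \<partial>?M0) = (\<integral>\<^sup>+ y. ennreal ((gW W n b X \<bullet> y) * (gW W n b X \<bullet> y)) \<partial>?M0)"
      by (simp only: fst_conv snd_conv F_upd)
    also have "\<dots> = ennreal (integral\<^sup>L ?M0 (\<lambda>y. (gW W n b X \<bullet> y) * (gW W n b X \<bullet> y)))"
      by (rule nn_integral_eq_integral[OF mvn_lin2(1)[OF pdx]]) simp
    also have "integral\<^sup>L ?M0 (\<lambda>y. (gW W n b X \<bullet> y) * (gW W n b X \<bullet> y)) = gW W n b X \<bullet> (Sx *v gW W n b X)"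
      using mvn_lin2(2)[OF pdx, where mu=0 and a="gW W n b X" and b="gW W n b X"] by simp
    finally show ?thesis .
  qed
  have qnn: "0 \<le> gW W n b X \<bullet> (Sx *v gW W n b X)" for b X by (rule psd_nonneg[OF pdx])
  have middle: "(\<integral>\<^sup>+ X. ennreal (gW W n b X \<bullet> (Sx *v gW W n b X)) \<partial>?P) = ennreal (b \<bullet> (Q *v b))" for b
    unfolding Q_def
    by (subst nn_integral_eq_integral[OF xstage_Q(1)[OF pdx]]) (simp_all add: qnn xstage_Q(2)[OF pdx])
  have Qnn: "0 \<le> b \<bullet> (Q *v b)" for b
  proof -
    have "0 \<le> integral\<^sup>L ?P (\<lambda>X. gW W n b X \<bullet> (Sx *v gW W n b X))"
      by (rule Bochner_Integration.integral_nonneg) (simp add: qnn)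
    then show ?thesis unfolding Q_def xstage_Q(2)[OF pdx] .
  qed
  have xs: "(\<integral>\<^sup>+ xs. ennreal (?F (b, xs)) \<partial>?M2) = ennreal (b \<bullet> (Q *v b))" for b
  proof -
    have ins: "{..n} = insert n {..<n}" by auto
    have fm0: "(\<lambda>xs. ennreal ((predictor n W 0 b xs - xs n \<bullet> b)\<^sup>2)) \<in> borel_measurable (PiM {..n} (\<lambda>_. ?M0))"
      unfolding predictor_def by measurable
    have fm: "(\<lambda>xs. ennreal (?F (b, xs))) \<in> borel_measurable (PiM (insert n {..<n}) (\<lambda>_. ?M0))"
      using fm0 unfolding ins by simp
    have "(\<integral>\<^sup>+ xs. ennreal (?F (b, xs)) \<partial>?M2) = (\<integral>\<^sup>+ X. (\<integral>\<^sup>+ y. ennreal (?F (b, X(n := y))) \<partial>?M0) \<partial>?P)"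
      unfolding ins by (rule PS.product_nn_integral_insert[OF _ _ fm]) auto
    also have "\<dots> = (\<integral>\<^sup>+ X. ennreal (gW W n b X \<bullet> (Sx *v gW W n b X)) \<partial>?P)"
      by (simp only: inner)
    also have "\<dots> = ennreal (b \<bullet> (Q *v b))" by (rule middle)
    finally show ?thesis .
  qed
  have total: "(\<integral>\<^sup>+ z. ennreal (?F z) \<partial>(?M1 \<Otimes>\<^sub>M ?M2)) = ennreal (trace (Sb ** transpose Q) + mu \<bullet> (Q *v mu))"
  proof -
    have "(\<integral>\<^sup>+ z. ennreal (?F z) \<partial>(?M1 \<Otimes>\<^sub>M ?M2)) = (\<integral>\<^sup>+ b. (\<integral>\<^sup>+ xs. ennreal (?F (b, xs)) \<partial>?M2) \<partial>?M1)"
      by (rule M2.nn_integral_fst[symmetric]) (use Fm in measurable)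
    also have "\<dots> = (\<integral>\<^sup>+ b. ennreal (b \<bullet> (Q *v b)) \<partial>?M1)" by (simp only: xs)
    also have "\<dots> = ennreal (integral\<^sup>L ?M1 (\<lambda>b. b \<bullet> (Q *v b)))"
      by (rule nn_integral_eq_integral[OF bstage(1)[OF pdb]]) (simp add: Qnn)
    also have "\<dots> = ennreal (trace (Sb ** transpose Q) + mu \<bullet> (Q *v mu))"
      by (simp add: bstage(2)[OF pdb])
    finally show ?thesis .
  qed
  have Enn: "0 \<le> trace (Sb ** transpose Q) + mu \<bullet> (Q *v mu)"
  proof -
    have "0 \<le> integral\<^sup>L ?M1 (\<lambda>b. b \<bullet> (Q *v b))" by (rule Bochner_Integration.integral_nonneg) (simp add: Qnn)
    then show ?thesis by (simp add: bstage(2)[OF pdb])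
  qed
  have "has_bochner_integral (?M1 \<Otimes>\<^sub>M ?M2) ?F (trace (Sb ** transpose Q) + mu \<bullet> (Q *v mu))"
    by (rule has_bochner_integral_nn_integral[OF Fm _ Enn total]) simp
  then show ?thesis unfolding task_measure_def Q_def by (rule has_bochner_integral_integral_eq)
qed

lemma trace_transpose: "trace (transpose A) = trace (A :: real^'n::finite^'n)"
  by (simp add: trace_def transpose_def)

lemma transpose_add': "transpose (A + B) = transpose A + transpose (B :: real^'n::finite^'m::finite)"
  by (simp add: transpose_def vec_eq_iff)

lemma matrix_add_rdistrib': "(A + B) ** C = A ** C + B ** (C :: real^'k::finite^'n::finite)" for A B :: "real^'n^'m::finite"
  by (simp add: matrix_matrix_mult_def vec_eq_iff sum.distrib algebra_simps)

lemma trace_add_mul: "trace ((A + B) ** C) = trace (A ** C) + trace (B ** (C :: real^'n::finite^'n))" for A B :: "real^'n^'n"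
  by (simp add: matrix_add_rdistrib' trace_add)

lemma trace_scaleR_mul: "trace ((c *\<^sub>R A) ** C) = c * trace (A ** (C :: real^'n::finite^'n))" for A :: "real^'n^'n"
  by (simp add: trace_def matrix_matrix_mult_def sum_distrib_left algebra_simps)

lemma trace_diff_mul: "trace ((A - B) ** C) = trace (A ** C) - trace (B ** (C :: real^'n::finite^'n))" for A B :: "real^'n^'n"
proof -
  have "A - B = A + (-1) *\<^sub>R B" by simp
  then show ?thesis by (simp only: trace_add_mul trace_scaleR_mul)
qed

lemma trace_mul_scaleR: "trace (A ** (c *\<^sub>R C)) = c * trace (A ** (C :: real^'n::finite^'n))" for A :: "real^'n^'n"
  by (simp add: trace_def matrix_matrix_mult_def sum_distrib_left algebra_simps)

lemma trace_mul_add: "trace (A ** (B + C)) = trace (A ** B) + trace (A ** (C :: real^'n::finite^'n))" for A :: "real^'n^'n"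
  by (simp add: matrix_add_ldistrib trace_add)

lemma trace_tXX: "trace (transpose X ** X) = (\<Sum>i\<in>UNIV. \<Sum>j\<in>UNIV. (X$j$i)\<^sup>2)" for X :: "real^'n::finite^'n"
  by (simp add: trace_def matrix_matrix_mult_def transpose_def power2_eq_square)

lemma trace_tXX_nonneg: "0 \<le> trace (transpose X ** X)" for X :: "real^'n::finite^'n"
  unfolding trace_tXX by (intro sum_nonneg) auto

lemma trace_tXX_zero: "trace (transpose X ** X) = 0 \<Longrightarrow> X = 0" for X :: "real^'n::finite^'n"
proof -
  assume h: "trace (transpose X ** X) = 0"
  have "\<forall>i\<in>UNIV. (\<Sum>j\<in>UNIV. (X$j$i)\<^sup>2) = 0"
    using h unfolding trace_tXX by (subst sum_nonneg_eq_0_iff[symmetric]) (auto intro: sum_nonneg)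
  then have "\<forall>i j. (X$j$i)\<^sup>2 = 0" by (simp add: sum_nonneg_eq_0_iff)
  then show "X = 0" by (simp add: vec_eq_iff)
qed

lemma pd_sym: "pos_def_mat S \<Longrightarrow> transpose S = S"
  unfolding pos_def_mat_def by auto

lemma pd_invertible:
  fixes S :: "real^'n::finite^'n"
  assumes "pos_def_mat S" shows "invertible S"
proof -
  obtain L :: "real^'n^'n" where L: "S = L ** transpose L" "invertible L" using pd_factor[OF assms] by blast
  show ?thesis unfolding L(1) by (intro invertible_mult L(2) transpose_invertible)
qed

lemma invertible_nonzero:
  fixes Z :: "real^'n::finite^'n"
  assumes "invertible Z" shows "Z \<noteq> 0"
proof
  assume "Z = 0"
  then have "mat 1 = (0 :: real^'n^'n)"
    using matrix_inv_both(1)[OF assms] by simp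
  moreover have "(mat 1 :: real^'n^'n) $ i $ i = 1" for i by (simp add: mat_def)
  ultimately show False by simp
qed

lemma opt_main:
  fixes Sx M W1 :: "real^'d::finite^'d" and n :: nat
  assumes n1: "n \<ge> 1" and pdx: "pos_def_mat Sx" and pdm: "pos_def_mat M"
    and min: "\<And>W. trace (Qmat n Sx W1 ** M) \<le> trace (Qmat n Sx W ** M)"
  shows "Sx ** W1 = (Sx ** M) ** matrix_inv ((real n + 1) *\<^sub>R (Sx ** M) + trace (Sx ** M) *\<^sub>R mat 1)
     \<and> trace (Qmat n Sx W1 ** M) = trace (Sx ** M) - real n * trace ((Sx ** W1) ** (Sx ** M))"
proof -
  define t where "t = trace (Sx ** M)"
  define G where "G = (real n + 1) *\<^sub>R (Sx ** M) + t *\<^sub>R mat 1"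
  define Lf where "Lf W = trace (Qmat n Sx W ** M)" for W
  define A1 where "A1 X Y = trace (Sx ** transpose X ** Sx ** Y ** Sx ** M)" for X Y
  define A2 where "A2 X Y = trace (Sx ** transpose X ** Sx ** Y)" for X Y
  define l where "l X = trace (Sx ** transpose X ** Sx ** M)" for X
  have sx: "transpose Sx = Sx" by (rule pd_sym[OF pdx])
  have sm: "transpose M = M" by (rule pd_sym[OF pdm])
  obtain L :: "real^'d^'d" where L: "Sx = L ** transpose L" "invertible L" using pd_factor[OF pdx] by blast
  obtain K :: "real^'d^'d" where K: "M = K ** transpose K" "invertible K" using pd_factor[OF pdm] by blast
  have invSx: "invertible Sx" by (rule pd_invertible[OF pdx])
  have tpos: "t > 0"
  proof -
    define Z where "Z = transpose L ** K"
    have "t = trace (transpose Z ** Z)"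
    proof -
      have "t = trace (L ** (transpose L ** K ** transpose K))"
        unfolding t_def L(1) K(1) by (simp only: matrix_mul_assoc)
      also have "\<dots> = trace ((transpose L ** K ** transpose K) ** L)" by (rule trace_mul_sym)
      also have "\<dots> = trace (transpose K ** (L ** transpose L ** K))"
        using trace_mul_sym[of "transpose L ** K" "transpose K ** L"] by (simp only: matrix_mul_assoc)
      also have "\<dots> = trace (transpose Z ** Z)"
        unfolding Z_def by (simp only: matrix_transpose_mul transpose_transpose matrix_mul_assoc)
      finally show ?thesis .
    qed
    moreover have "Z \<noteq> 0" unfolding Z_def by (intro invertible_nonzero invertible_mult transpose_invertible L K)
    ultimately show ?thesis using trace_tXX_nonneg[of Z] trace_tXX_zero[of Z] by fastforce
  qed
  have Lexp: "Lf W = (real n * real n + real n) * A1 W W + real n * t * A2 W W - 2 * real n * l W + t" for W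
  proof -
    have tB: "transpose (transpose W ** Sx ** W) = transpose W ** Sx ** W"
      by (simp add: matrix_transpose_mul sx matrix_mul_assoc)
    show ?thesis
      unfolding Lf_def Qmat_def tB
      by (simp add: trace_add_mul trace_diff_mul trace_scaleR_mul A1_def A2_def l_def t_def matrix_mul_assoc
          algebra_simps)
  qed
  have A1_add: "A1 (X + Y) (X + Y) = A1 X X + A1 X Y + A1 Y X + A1 Y Y" for X Y
    unfolding A1_def
    by (simp add: transpose_add' matrix_add_ldistrib matrix_add_rdistrib' trace_add matrix_mul_assoc)
  have A2_add: "A2 (X + Y) (X + Y) = A2 X X + A2 X Y + A2 Y X + A2 Y Y" for X Y
    unfolding A2_def
    by (simp add: transpose_add' matrix_add_ldistrib matrix_add_rdistrib' trace_add matrix_mul_assoc)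
  have l_add: "l (X + Y) = l X + l Y" for X Y
    unfolding l_def by (simp add: transpose_add' matrix_add_ldistrib matrix_add_rdistrib' trace_add matrix_mul_assoc)
  have A1_sym: "A1 X Y = A1 Y X" for X Y
  proof -
    have "A1 X Y = trace (transpose (Sx ** transpose X ** Sx ** Y ** Sx ** M))"
      unfolding A1_def trace_transpose ..
    also have "transpose (Sx ** transpose X ** Sx ** Y ** Sx ** M) = M ** (Sx ** transpose Y ** Sx ** X ** Sx)"
      by (simp add: matrix_transpose_mul sx sm matrix_mul_assoc)
    also have "trace (M ** (Sx ** transpose Y ** Sx ** X ** Sx)) = trace ((Sx ** transpose Y ** Sx ** X ** Sx) ** M)"
      by (rule trace_mul_sym)
    finally show ?thesis unfolding A1_def by (simp add: matrix_mul_assoc)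
  qed
  have A2_sym: "A2 X Y = A2 Y X" for X Y
  proof -
    have "A2 X Y = trace (transpose (Sx ** transpose X ** Sx ** Y))"
      unfolding A2_def trace_transpose ..
    also have "transpose (Sx ** transpose X ** Sx ** Y) = transpose Y ** (Sx ** X ** Sx)"
      by (simp add: matrix_transpose_mul sx matrix_mul_assoc)
    also have "trace (transpose Y ** (Sx ** X ** Sx)) = trace ((Sx ** X ** Sx) ** transpose Y)"
      by (rule trace_mul_sym)
    also have "\<dots> = trace (Sx ** (X ** Sx ** transpose Y))" by (simp add: matrix_mul_assoc)
    also have "\<dots> = trace ((X ** Sx ** transpose Y) ** Sx)" by (rule trace_mul_sym)
    also have "\<dots> = trace (X ** (Sx ** transpose Y ** Sx))" by (simp add: matrix_mul_assoc)
    also have "\<dots> = trace ((Sx ** transpose Y ** Sx) ** X)" by (rule trace_mul_sym)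
    finally show ?thesis unfolding A2_def by (simp add: matrix_mul_assoc)
  qed
  have lin_G: "trace (P ** (c *\<^sub>R X + e *\<^sub>R mat 1)) = c * trace (P ** X) + e * trace P" for P X :: "real^'d^'d" and c e
    by (simp only: matrix_add_ldistrib trace_add trace_mul_scaleR matrix_mul_rid)
  have Ginv: "invertible G"
  proof -
    have "inj ((*v) G)"
    proof (subst vec.inj_iff_eq_0, intro allI impI)
      fix v assume Gv: "G *v v = 0"
      define w where "w = M *v v"
      have "G *v v = (real n + 1) *\<^sub>R (Sx *v w) + t *\<^sub>R v"
        unfolding G_def w_def
        by (simp add: matrix_vector_mult_add_rdistrib scaleR_matrix_vector_assoc[symmetric] matrix_vector_mul_assoc)
      then have "0 = w \<bullet> ((real n + 1) *\<^sub>R (Sx *v w) + t *\<^sub>R v)" using Gv by simp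
      also have "\<dots> = (real n + 1) * (w \<bullet> (Sx *v w)) + t * (v \<bullet> (M *v v))"
        unfolding w_def by (simp add: inner_add_right inner_commute)
      finally have eq0: "(real n + 1) * (w \<bullet> (Sx *v w)) + t * (v \<bullet> (M *v v)) = 0" by simp
      have "0 \<le> w \<bullet> (Sx *v w)" by (rule psd_nonneg[OF pdx])
      moreover have "0 \<le> v \<bullet> (M *v v)" by (rule psd_nonneg[OF pdm])
      ultimately have "t * (v \<bullet> (M *v v)) = 0"
        using eq0 tpos by (smt (verit) mult_nonneg_nonneg of_nat_0_le_iff)
      then have "v \<bullet> (M *v v) = 0" using tpos by simp
      then show "v = 0" using pdm unfolding pos_def_mat_def by (metis less_irrefl)
    qed
    then show ?thesis
      by (metis invertible_left_inverse matrix_left_invertible_injective)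
  qed
  define W0 where "W0 = matrix_inv Sx ** (Sx ** M) ** matrix_inv G"
  have SxW0: "Sx ** W0 = (Sx ** M) ** matrix_inv G"
    unfolding W0_def using matrix_inv_both(1)[OF invSx] by (simp add: matrix_mul_assoc)
  have SxW0G: "Sx ** W0 ** G = Sx ** M"
    unfolding SxW0 using matrix_inv_both(2)[OF Ginv] by (simp add: matrix_mul_assoc[symmetric])
  have stat1: "(real n + 1) * A1 D W0 + t * A2 D W0 = l D" for D
  proof -
    have "trace ((Sx ** transpose D ** Sx ** W0) ** G) = (real n + 1) * A1 D W0 + t * A2 D W0"
      unfolding G_def lin_G A1_def A2_def by (simp add: matrix_mul_assoc)
    moreover have "trace ((Sx ** transpose D ** Sx ** W0) ** G) = l D"
    proof -
      have "(Sx ** transpose D ** Sx ** W0) ** G = Sx ** transpose D ** (Sx ** W0 ** G)"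
        by (simp add: matrix_mul_assoc)
      then show ?thesis unfolding l_def SxW0G by (simp add: matrix_mul_assoc)
    qed
    ultimately show ?thesis by simp
  qed
  have stat: "(real n * real n + real n) * A1 D W0 + real n * t * A2 D W0 = real n * l D" for D
  proof -
    have "(real n * real n + real n) * A1 D W0 + real n * t * A2 D W0 = real n * ((real n + 1) * A1 D W0 + t * A2 D W0)"
      by (simp add: algebra_simps)
    then show ?thesis using stat1[of D] by simp
  qed
  have expand: "Lf (W0 + D) = Lf W0 + ((real n * real n + real n) * A1 D D + real n * t * A2 D D)" for D
  proof -
    have "Lf (W0 + D) = (real n * real n + real n) * (A1 W0 W0 + 2 * A1 D W0 + A1 D D)
        + real n * t * (A2 W0 W0 + 2 * A2 D W0 + A2 D D) - 2 * real n * (l W0 + l D) + t"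
      unfolding Lexp A1_add A2_add l_add A1_sym[of W0 D] A2_sym[of W0 D] by (simp add: algebra_simps)
    also have "\<dots> = Lf W0 + ((real n * real n + real n) * A1 D D + real n * t * A2 D D)
        + 2 * ((real n * real n + real n) * A1 D W0 + real n * t * A2 D W0 - real n * l D)"
      unfolding Lexp by (simp add: algebra_simps)
    also have "\<dots> = Lf W0 + ((real n * real n + real n) * A1 D D + real n * t * A2 D D)"
      using stat[of D] by simp
    finally show ?thesis .
  qed
  define D where "D = W1 - W0"
  have W1eq: "W1 = W0 + D" unfolding D_def by simp
  define V where "V = transpose L ** D ** L"
  define Y where "Y = transpose L ** D ** L ** transpose L ** K"
  have A2V: "A2 D D = trace (transpose V ** V)"
  proof -
    have "A2 D D = trace (L ** (transpose L ** transpose D ** L ** transpose L ** D))"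
      unfolding A2_def L(1) by (simp add: matrix_mul_assoc)
    also have "\<dots> = trace ((transpose L ** transpose D ** L ** transpose L ** D) ** L)" by (rule trace_mul_sym)
    also have "\<dots> = trace (transpose V ** V)"
      unfolding V_def by (simp add: matrix_transpose_mul matrix_mul_assoc)
    finally show ?thesis .
  qed
  have A1Y: "A1 D D = trace (transpose Y ** Y)"
  proof -
    have "A1 D D = trace ((L ** transpose L ** transpose D ** L ** transpose L ** D ** L ** transpose L ** K) ** transpose K)"
      unfolding A1_def L(1) K(1) by (simp add: matrix_mul_assoc)
    also have "\<dots> = trace (transpose K ** (L ** transpose L ** transpose D ** L ** transpose L ** D ** L ** transpose L ** K))"
      by (rule trace_mul_sym)
    also have "\<dots> = trace (transpose Y ** Y)"
      unfolding Y_def by (simp add: matrix_transpose_mul matrix_mul_assoc)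
    finally show ?thesis .
  qed
  have c1: "real n * real n + real n > 0"
  proof -
    have "real n \<ge> 1" using n1 by simp
    then show ?thesis by (smt (verit) mult_nonneg_nonneg)
  qed
  have nt: "real n * t > 0" using n1 tpos by simp
  have "Lf W1 \<le> Lf W0" unfolding Lf_def by (rule min)
  then have "(real n * real n + real n) * A1 D D + real n * t * A2 D D \<le> 0"
    unfolding W1eq expand by simp
  moreover have "0 \<le> A1 D D" unfolding A1Y by (rule trace_tXX_nonneg)
  moreover have "0 \<le> A2 D D" unfolding A2V by (rule trace_tXX_nonneg)
  ultimately have "real n * t * A2 D D \<le> 0" using c1 by (smt (verit) mult_nonneg_nonneg)
  then have "A2 D D \<le> 0"
  proof -
    assume h: "real n * t * A2 D D \<le> 0"
    show ?thesis
    proof (rule ccontr)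
      assume "\<not> A2 D D \<le> 0"
      then have "real n * t * A2 D D > 0" using nt by simp
      then show False using h by simp
    qed
  qed
  then have "trace (transpose V ** V) = 0" using \<open>0 \<le> A2 D D\<close> A2V by simp
  then have V0: "V = 0" by (rule trace_tXX_zero)
  have "D = 0"
  proof -
    define RL where "RL = matrix_inv L"
    have LR: "L ** RL = mat 1" using matrix_inv_both(1)[OF L(2)] RL_def by simp
    have "transpose RL ** V ** RL = (transpose (L ** RL)) ** D ** (L ** RL)"
      unfolding V_def by (simp add: matrix_transpose_mul matrix_mul_assoc)
    also have "\<dots> = D" unfolding LR by (simp add: transpose_mat)
    finally show ?thesis using V0 by simp
  qed
  then have W1W0: "W1 = W0" using W1eq by simp
  have lW0: "l W0 = trace ((Sx ** W0) ** (Sx ** M))"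
  proof -
    have "l W0 = trace (transpose (Sx ** transpose W0 ** Sx ** M))" unfolding l_def trace_transpose ..
    also have "transpose (Sx ** transpose W0 ** Sx ** M) = M ** (Sx ** W0 ** Sx)"
      by (simp add: matrix_transpose_mul sx sm matrix_mul_assoc)
    also have "trace (M ** (Sx ** W0 ** Sx)) = trace ((Sx ** W0 ** Sx) ** M)" by (rule trace_mul_sym)
    finally show ?thesis by (simp add: matrix_mul_assoc)
  qed
  have "Lf W0 = t - real n * l W0"
    using Lexp[of W0] stat[of W0] by simp
  then show ?thesis
    unfolding Lf_def[symmetric] W1W0 SxW0[symmetric] lW0[symmetric] t_def[symmetric] G_def[symmetric]
    by simp
qed

lemma trace_mul_sum:
  fixes Q :: "real^'d::finite^'d" and X :: "'k \<Rightarrow> real^'d^'d"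
  assumes "finite K"
  shows "trace (Q ** (\<Sum>k\<in>K. c k *\<^sub>R X k)) = (\<Sum>k\<in>K. c k * trace (Q ** X k))"
  using assms
proof (induction K rule: finite_induct)
  case empty
  then show ?case by (simp add: trace_def matrix_matrix_mult_def)
next
  case (insert a F)
  then show ?case by (simp add: trace_mul_add trace_mul_scaleR)
qed

lemma transpose_sum:
  fixes X :: "'k \<Rightarrow> real^'d::finite^'d"
  assumes "finite K"
  shows "transpose (\<Sum>k\<in>K. c k *\<^sub>R X k) = (\<Sum>k\<in>K. c k *\<^sub>R transpose (X k))"
  using assms
proof (induction K rule: finite_induct)
  case empty
  then show ?case by (simp add: transpose_def vec_eq_iff)
next
  case (insert a F)
  then show ?case by (simp add: transpose_add' transpose_scalar)
qed

lemma mat_sum_vec: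
  fixes X :: "'k \<Rightarrow> real^'d::finite^'d"
  assumes "finite K"
  shows "(\<Sum>k\<in>K. c k *\<^sub>R X k) *v v = (\<Sum>k\<in>K. c k *\<^sub>R (X k *v v))"
  using assms
proof (induction K rule: finite_induct)
  case empty
  then show ?case by (simp add: matrix_vector_mult_def vec_eq_iff)
next
  case (insert a F)
  then show ?case by (simp add: matrix_vector_mult_add_rdistrib scaleR_matrix_vector_assoc[symmetric])
qed

lemma outer_mv: "outer u u *v v = (u \<bullet> v) *\<^sub>R (u :: real^'d::finite)"
  by (simp add: outer_def matrix_vector_mult_def inner_vec_def vec_eq_iff sum_distrib_left mult_ac)

lemma outer_transpose: "transpose (outer u u) = outer u (u :: real^'d::finite)"
  by (simp add: outer_def transpose_def vec_eq_iff mult.commute)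

lemma trace_outer: "trace (Q ** outer u u) = u \<bullet> (Q *v (u :: real^'d::finite))"
  by (simp add: trace_def matrix_matrix_mult_def outer_def inner_vec_def matrix_vector_mult_def
      sum_distrib_left mult_ac)

lemma per_task:
  fixes Sb Q :: "real^'d::finite^'d"
  assumes "pos_def_mat Sb"
  shows "trace (Sb ** transpose Q) + mu \<bullet> (Q *v mu) = trace (Q ** (Sb + outer mu mu))"
proof -
  have "trace (Sb ** transpose Q) = trace (transpose (Q ** transpose Sb))"
    by (simp add: matrix_transpose_mul)
  also have "\<dots> = trace (Q ** Sb)" by (simp add: trace_transpose pd_sym[OF assms])
  finally show ?thesis by (simp add: matrix_add_ldistrib trace_add trace_outer)
qed

lemma M_pd:
  fixes Sb :: "'k::finite \<Rightarrow> real^'d::finite^'d" and mu :: "'k \<Rightarrow> real^'d"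
  assumes Sb_pd: "\<And>k. pos_def_mat (Sb k)" and nn: "\<And>k. prob k \<ge> 0" and s1: "(\<Sum>k\<in>UNIV. prob k) = 1"
  shows "pos_def_mat (\<Sum>k\<in>UNIV. prob k *\<^sub>R (Sb k + outer (mu k) (mu k)))"
  unfolding pos_def_mat_def
proof (intro conjI allI impI)
  show "transpose (\<Sum>k\<in>UNIV. prob k *\<^sub>R (Sb k + outer (mu k) (mu k))) = (\<Sum>k\<in>UNIV. prob k *\<^sub>R (Sb k + outer (mu k) (mu k)))"
    by (simp add: transpose_sum transpose_add' outer_transpose pd_sym[OF Sb_pd])
next
  fix v :: "real^'d" assume v: "v \<noteq> 0"
  have eq: "v \<bullet> ((\<Sum>k\<in>UNIV. prob k *\<^sub>R (Sb k + outer (mu k) (mu k))) *v v)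
      = (\<Sum>k\<in>UNIV. prob k * (v \<bullet> (Sb k *v v) + (mu k \<bullet> v) * (mu k \<bullet> v)))"
    by (simp add: mat_sum_vec matrix_vector_mult_add_rdistrib outer_mv inner_sum_right inner_add_right
        inner_commute)
  obtain k0 where k0: "prob k0 > 0"
  proof (rule ccontr)
    assume "\<not> thesis"
    then have "\<forall>k. prob k \<le> 0" using that by (meson not_le)
    then have "\<forall>k. prob k = 0" using nn by (simp add: order_antisym)
    then show False using s1 by simp
  qed
  have terms: "0 \<le> prob k * (v \<bullet> (Sb k *v v) + (mu k \<bullet> v) * (mu k \<bullet> v))" for k
    using nn[of k] psd_nonneg[OF Sb_pd[of k], of v] by (simp add: mult_nonneg_nonneg)
  have pos0: "0 < prob k0 * (v \<bullet> (Sb k0 *v v) + (mu k0 \<bullet> v) * (mu k0 \<bullet> v))"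
  proof -
    have "0 < v \<bullet> (Sb k0 *v v)" using Sb_pd[of k0] v unfolding pos_def_mat_def by blast
    then have "0 < v \<bullet> (Sb k0 *v v) + (mu k0 \<bullet> v) * (mu k0 \<bullet> v)" by (simp add: add_pos_nonneg)
    then show ?thesis using k0 by simp
  qed
  have "prob k0 * (v \<bullet> (Sb k0 *v v) + (mu k0 \<bullet> v) * (mu k0 \<bullet> v))
      \<le> (\<Sum>k\<in>UNIV. prob k * (v \<bullet> (Sb k *v v) + (mu k \<bullet> v) * (mu k \<bullet> v)))"
    by (rule member_le_sum) (auto intro: terms)
  then show "0 < v \<bullet> ((\<Sum>k\<in>UNIV. prob k *\<^sub>R (Sb k + outer (mu k) (mu k))) *v v)"
    unfolding eq using pos0 by linarith
qed

theorem theorem1: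
  fixes n :: nat
    and Sx :: "real^'d^'d"
    and prob :: "'k::finite \<Rightarrow> real"
    and mu :: "'k \<Rightarrow> real^'d"
    and Sb :: "'k \<Rightarrow> real^'d^'d"
    and W_PT :: "real^'d^'d"
  assumes n_pos: "n \<ge> 1"
    and Sx_pd: "pos_def_mat Sx"
    and Sb_pd: "\<And>k. pos_def_mat (Sb k)"
    and probnonneg: "\<And>k. prob k \<ge> 0"
    and probsum: "(\<Sum>k\<in>UNIV. prob k) = 1"
    and W_min: "\<And>W. mt_loss n Sx prob mu Sb W_PT (\<lambda>_. 0) \<le> mt_loss n Sx prob mu Sb W (\<lambda>_. 0)"
  shows "Sx ** W_PT = Sigma_tilde Sx prob mu Sb **
           matrix_inv ((real n + 1) *\<^sub>R Sigma_tilde Sx prob mu Sb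
                       + trace (Sigma_tilde Sx prob mu Sb) *\<^sub>R mat 1)
       \<and> mt_loss n Sx prob mu Sb W_PT (\<lambda>_. 0) =
           trace (Sigma_tilde Sx prob mu Sb)
           - real n * trace ((Sx ** W_PT) ** Sigma_tilde Sx prob mu Sb)"
proof -
  define M where "M = (\<Sum>k\<in>UNIV. prob k *\<^sub>R (Sb k + outer (mu k) (mu k)))"
  have Sig: "Sigma_tilde Sx prob mu Sb = Sx ** M" unfolding Sigma_tilde_def M_def ..
  have loss: "mt_loss n Sx prob mu Sb W (\<lambda>_. 0) = trace (Qmat n Sx W ** M)" for W
  proof -
    have "mt_loss n Sx prob mu Sb W (\<lambda>_. 0) =
        (\<Sum>k\<in>UNIV. prob k * (trace (Sb k ** transpose (Qmat n Sx W)) + mu k \<bullet> (Qmat n Sx W *v mu k)))"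
      unfolding mt_loss_def by (simp add: task_loss[OF Sx_pd Sb_pd])
    also have "\<dots> = (\<Sum>k\<in>UNIV. prob k * trace (Qmat n Sx W ** (Sb k + outer (mu k) (mu k))))"
      by (simp add: per_task[OF Sb_pd])
    also have "\<dots> = trace (Qmat n Sx W ** M)"
      unfolding M_def by (simp add: trace_mul_sum)
    finally show ?thesis .
  qed
  have pdM: "pos_def_mat M" unfolding M_def by (rule M_pd[OF Sb_pd probnonneg probsum])
  have min: "trace (Qmat n Sx W_PT ** M) \<le> trace (Qmat n Sx W ** M)" for W
    using W_min[of W] unfolding loss .
  from opt_main[OF n_pos Sx_pd pdM min]
  show ?thesis unfolding Sig loss .
qed

end
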